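(* Let $N\ge 4$ be even, $p<0$, and let $0\le r_1<\dots<r_N\le 1$ be distinct points. Define $\sigma\in S_N$ by $$\sigma(i)=\begin{cases}1 & i=1,\\ \frac N2-i+3 & i \text{ even},\ i\le \frac N2+1,\\ N-i+3 & i\text{ odd},\ 1<i\le\frac N2+1,\\ i-\frac N2 & i\text{ even},\ i>\frac N2+1,\\ i & i\text{ odd},\ i>\frac N2+1.\end{cases}$$ Let $\tau\in S_N$ be the cyclic shift $\tau(i)=i+1$ for $i\le N-1$, $\tau(N)=1$, and set $\sigma_k=\tau^k\circ\sigma$ for $k=1,\dots,N$. Then an optimal Hamiltonian cycle is among the cycles $h_k^*=h[\sigma_k]$, $k=1,\dots,N$; i.e. $\min_{k}E(h[\sigma_k])\le E(h)$ for every Hamiltonian cycle $h$ of $\mathcal K_N$.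
   Context: The points are the vertices of the complete graph $\mathcal K_N$. For $p\in\mathbb R$ the weight of the edge $\{r_i,r_j\}$ is $w_{ij}=|r_i-r_j|^p$, and the cost of a Hamiltonian cycle $h$ is $E(h)=\sum_{e\in h}w_e$. For $\sigma\in S_N$, $h[\sigma]$ denotes the Hamiltonian cycle with edges $\{r_{\sigma(i)},r_{\sigma(i+1)}\}$, $i=1,\dots,N$, with $\sigma(N+1):=\sigma(1)$. *)

theory Defs
  imports Complex_Main "HOL-Combinatorics.Permutations"
begin

text \<open>Vertices of K_N are identified with the indices 1..N (points r 1 < ... < r N).
  An edge is a 2-element set of indices.\<close>

definition cyc_next :: "nat \<Rightarrow> nat \<Rightarrow> nat" where
  "cyc_next N i = (if i = N then 1 else i + 1)"

definition cycle_edges :: "nat \<Rightarrow> (nat \<Rightarrow> nat) \<Rightarrow> nat set set" where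
  "cycle_edges N \<pi> = (\<lambda>i. {\<pi> i, \<pi> (cyc_next N i)}) ` {1..N}"

definition ham_cycle :: "nat \<Rightarrow> nat set set \<Rightarrow> bool" where
  "ham_cycle N H \<longleftrightarrow> (\<exists>\<pi>. \<pi> permutes {1..N} \<and> H = cycle_edges N \<pi>)"

definition edge_weight :: "(nat \<Rightarrow> real) \<Rightarrow> real \<Rightarrow> nat set \<Rightarrow> real" where
  "edge_weight r p e = \<bar>r (Min e) - r (Max e)\<bar> powr p"

definition cost :: "(nat \<Rightarrow> real) \<Rightarrow> real \<Rightarrow> nat set set \<Rightarrow> real" where
  "cost r p H = (\<Sum>e\<in>H. edge_weight r p e)"

definition sigma0 :: "nat \<Rightarrow> nat \<Rightarrow> nat" where
  "sigma0 N i =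
     (if i = 1 then 1
      else if even i \<and> i \<le> N div 2 + 1 then N div 2 + 3 - i
      else if odd i \<and> i \<le> N div 2 + 1 then N + 3 - i
      else if even i then i - N div 2
      else i)"

definition tau :: "nat \<Rightarrow> nat \<Rightarrow> nat" where
  "tau N i = (if i \<le> N - 1 then i + 1 else 1)"

end

theory Submission
  imports Defs
begin


lemma powr_cvx_ineq:
  fixes p A B C :: real
  assumes p: "p < 0" and A: "0 < A" and B: "0 < B" and C: "0 < C"
  shows "(A + B) powr p + (B + C) powr p < B powr p + (A + B + C) powr p"
proof -
  define g where "g t = (t + A) powr p - t powr p" for t
  have "g B < g (B + C)"
  proof (rule DERIV_pos_imp_increasing[where f=g])
    show "B < B + C" using C by simp
    fix x assume x: "B \<le> x" "x \<le> B + C"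
    have x0: "0 < x" using x B by simp
    have d: "(g has_real_derivative (p * (x + A) powr (p - 1) * 1 - p * x powr (p - 1))) (at x)"
      unfolding g_def
      by (rule derivative_eq_intros has_real_derivative_powr[THEN DERIV_chain2] | use x0 A in simp)+
    have "(x + A) powr (p - 1) < x powr (p - 1)"
      using powr_less_mono2_neg[of "p - 1" x "x + A"] p x0 A by simp
    then have "0 < p * (x + A) powr (p - 1) * 1 - p * x powr (p - 1)"
      using p by (simp add: algebra_simps mult_less_cancel_left_neg)
    then show "\<exists>y. (g has_real_derivative y) (at x) \<and> 0 < y" using d by blast
  qed
  then show ?thesis unfolding g_def by (simp add: algebra_simps)
qed



definition sep :: "nat \<Rightarrow> nat \<Rightarrow> nat \<Rightarrow> bool" where
  "sep a b c \<longleftrightarrow> min a b < c \<and> c < max a b"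

definition crs :: "nat \<Rightarrow> nat \<Rightarrow> nat \<Rightarrow> nat \<Rightarrow> bool" where
  "crs a b c d \<longleftrightarrow> sep a b c \<noteq> sep a b d"

lemma crs_swap1: "crs a b c d = crs b a c d"
  by (simp add: crs_def sep_def min.commute max.commute)
lemma crs_swap2: "crs a b c d = crs a b d c"
  by (auto simp add: crs_def)
lemma crs_sym: "distinct [a,b,c,d] \<Longrightarrow> crs a b c d = crs c d a b"
  unfolding crs_def sep_def by (auto simp: min_def max_def)

definition wt :: "(nat \<Rightarrow> real) \<Rightarrow> real \<Rightarrow> nat \<Rightarrow> nat \<Rightarrow> real" where
  "wt r p x y = \<bar>r x - r y\<bar> powr p"

lemma wt_sym: "wt r p x y = wt r p y x"
  by (simp add: wt_def abs_minus_commute)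

lemma wt_lt_min:
  assumes p: "p < 0" and mono: "strict_mono_on S r"
    and S: "a \<in> S" "b \<in> S" "u \<in> S" "v \<in> S"
    and d: "distinct [a,b,u,v]" and m: "a < b" "a < u" "a < v"
    and nc: "\<not> crs a b u v" and c: "crs a u b v"
  shows "wt r p a u + wt r p b v < wt r p a b + wt r p u v"
proof (cases "b < u")
  case True
  with c m d have vu: "u < v" unfolding crs_def sep_def by (auto simp: min_def max_def)
  have r1: "r a < r b" "r b < r u" "r u < r v"
    using mono S m True vu by (auto simp: strict_mono_on_def)
  have "wt r p a u < wt r p a b"
    unfolding wt_def using r1 p by (auto intro!: powr_less_mono2_neg)
  moreover have "wt r p b v < wt r p u v"
    unfolding wt_def using r1 p by (auto intro!: powr_less_mono2_neg)
  ultimately show ?thesis by simp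
next
  case False
  then have ub: "u < b" using d by auto
  with c m d have va: "v < u" unfolding crs_def sep_def by (auto simp: min_def max_def)
  have r1: "r a < r v" "r v < r u" "r u < r b"
    using mono S m ub va by (auto simp: strict_mono_on_def)
  have "(r v - r a + (r u - r v)) powr p + ((r u - r v) + (r b - r u)) powr p
        < (r u - r v) powr p + (r v - r a + (r u - r v) + (r b - r u)) powr p"
    using r1 p by (intro powr_cvx_ineq) auto
  then show ?thesis unfolding wt_def using r1 by (simp add: abs_if)
qed

lemma wt_lt:
  assumes p: "p < 0" and mono: "strict_mono_on S r"
    and S: "a \<in> S" "b \<in> S" "u \<in> S" "v \<in> S"
    and d: "distinct [a,b,u,v]"
    and nc: "\<not> crs a b u v" and c: "crs a u b v"
  shows "wt r p a u + wt r p b v < wt r p a b + wt r p u v"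
proof -
  have c1: "\<not> crs u v a b" using nc d crs_sym[of a b u v] by auto
  have c2: "crs u a v b" using c crs_swap1[of a u] crs_swap2 crs_swap1[of u] by metis
  have c3: "\<not> crs b a v u" using nc crs_swap1 crs_swap2 by metis
  have c4: "crs b v a u" using c d crs_sym[of a u b v] by auto
  have c5: "\<not> crs v u b a" using c1 crs_swap1 crs_swap2 by metis
  have c6: "crs v b u a" using c2 d crs_sym[of u a v b] by auto
  consider "a < b \<and> a < u \<and> a < v" | "u < a \<and> u < b \<and> u < v" | "b < a \<and> b < u \<and> b < v"
    | "v < a \<and> v < b \<and> v < u" using d by (auto simp: not_less) (metis less_trans linorder_neqE_nat)+
  then show ?thesis
  proof cases
    case 1 then show ?thesis using wt_lt_min[OF p mono S d _ _ _ nc c] by auto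
  next
    case 2 then show ?thesis using wt_lt_min[OF p mono S(3,4,1,2) _ _ _ _ c1 c2] d
      by (auto simp: wt_sym)
  next
    case 3 then show ?thesis using wt_lt_min[OF p mono S(2,1,4,3) _ _ _ _ c3 c4] d
      by (auto simp: wt_sym)
  next
    case 4 then show ?thesis using wt_lt_min[OF p mono S(4,3,2,1) _ _ _ _ c5 c6] d
      by (auto simp: wt_sym)
  qed
qed



abbreviation "nx N \<equiv> cyc_next N"

lemma nx_in: "k \<in> {1..N} \<Longrightarrow> cyc_next N k \<in> {1..N}"
  by (auto simp: cyc_next_def)

lemma nx_nx_ne: "3 \<le> N \<Longrightarrow> l \<in> {1..N} \<Longrightarrow> cyc_next N (cyc_next N l) \<noteq> l"
  by (auto simp: cyc_next_def)

lemma nx_ne: "2 \<le> N \<Longrightarrow> l \<in> {1..N} \<Longrightarrow> cyc_next N l \<noteq> l"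
  by (auto simp: cyc_next_def)

lemma edge_inj:
  assumes inj: "inj_on \<pi> {1..N}" and N: "3 \<le> N"
  shows "inj_on (\<lambda>k. {\<pi> k, \<pi> (cyc_next N k)}) {1..N}"
proof (rule inj_onI)
  fix k l assume k: "k \<in> {1..N}" and l: "l \<in> {1..N}"
    and e: "{\<pi> k, \<pi> (cyc_next N k)} = {\<pi> l, \<pi> (cyc_next N l)}"
  have nk: "cyc_next N k \<in> {1..N}" and nl: "cyc_next N l \<in> {1..N}" using k l nx_in by auto
  from e consider "\<pi> k = \<pi> l" | "\<pi> k = \<pi> (cyc_next N l) \<and> \<pi> (cyc_next N k) = \<pi> l"
    by (auto simp: doubleton_eq_iff)
  then show "k = l"
  proof cases
    case 1 then show ?thesis using inj k l by (auto dest: inj_onD)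
  next
    case 2
    then have "k = cyc_next N l" "cyc_next N k = l" using inj k l nk nl by (auto dest: inj_onD)
    then show ?thesis using nx_nx_ne[OF N l] by simp
  qed
qed

definition Cc :: "(nat \<Rightarrow> real) \<Rightarrow> real \<Rightarrow> nat \<Rightarrow> (nat \<Rightarrow> nat) \<Rightarrow> real" where
  "Cc r p N \<pi> = (\<Sum>k\<in>{1..N}. wt r p (\<pi> k) (\<pi> (cyc_next N k)))"

lemma edge_weight_pair: "edge_weight r p {a, b} = wt r p a b"
  by (cases "a \<le> b") (auto simp: edge_weight_def wt_def abs_minus_commute max_def min_def)

lemma cost_eq:
  assumes inj: "inj_on \<pi> {1..N}" and N: "3 \<le> N"
  shows "cost r p (cycle_edges N \<pi>) = Cc r p N \<pi>"
  unfolding cost_def cycle_edges_def Cc_def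
  by (subst sum.reindex[OF edge_inj[OF inj N]]) (simp add: edge_weight_pair)

lemma sum_split_seg:
  fixes g :: "nat \<Rightarrow> real"
  assumes "1 \<le> i" "i < j" "j \<le> N"
  shows "(\<Sum>k\<in>{1..N}. g k) = (\<Sum>k\<in>{1..N} - {i..j}. g k) + g i + g j + (\<Sum>k\<in>{i+1..j-1}. g k)"
proof -
  have "(\<Sum>k\<in>{1..N}. g k) = (\<Sum>k\<in>{1..N} - {i..j}. g k) + (\<Sum>k\<in>{i..j}. g k)"
    using assms by (subst sum.subset_diff[of "{i..j}"]) auto
  moreover have "{i..j} = insert i (insert j {i+1..j-1})" using assms by auto
  moreover have "(\<Sum>k\<in>insert i (insert j {i+1..j-1}). g k) = g i + g j + (\<Sum>k\<in>{i+1..j-1}. g k)"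
    using assms by (subst sum.insert; auto)+ 
  ultimately show ?thesis by simp
qed

definition swp :: "nat \<Rightarrow> nat \<Rightarrow> nat \<Rightarrow> nat" where
  "swp i j k = (if i < k \<and> k \<le> j then i + j + 1 - k else k)"

lemma swp_permutes:
  assumes "1 \<le> i" "i < j" "j \<le> N"
  shows "swp i j permutes {1..N}"
proof (rule bij_imp_permutes)
  show "bij_betw (swp i j) {1..N} {1..N}"
    by (rule bij_betw_byWitness[where f'="swp i j"]) (use assms in \<open>auto simp: swp_def\<close>)
  show "\<And>x. x \<notin> {1..N} \<Longrightarrow> swp i j x = x" using assms by (auto simp: swp_def)
qed

lemma two_opt:
  assumes perm: "\<pi> permutes {1..N}" and ij: "1 \<le> i" "i + 2 \<le> j" "j \<le> N"
  shows "(\<pi> \<circ> swp i j) permutes {1..N}"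
    and "Cc r p N (\<pi> \<circ> swp i j) = Cc r p N \<pi> - wt r p (\<pi> i) (\<pi> (i+1)) - wt r p (\<pi> j) (\<pi> (cyc_next N j))
          + wt r p (\<pi> i) (\<pi> j) + wt r p (\<pi> (i+1)) (\<pi> (cyc_next N j))"
proof -
  show "(\<pi> \<circ> swp i j) permutes {1..N}"
    using permutes_compose[OF swp_permutes perm] ij by auto
  define g where "g k = wt r p (\<pi> k) (\<pi> (cyc_next N k))" for k
  define g' where "g' k = wt r p ((\<pi> \<circ> swp i j) k) ((\<pi> \<circ> swp i j) (cyc_next N k))" for k
  have ij': "1 \<le> i" "i < j" "j \<le> N" using ij by auto
  have e1: "(\<Sum>k\<in>{1..N} - {i..j}. g' k) = (\<Sum>k\<in>{1..N} - {i..j}. g k)"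
    by (rule sum.cong) (use ij in \<open>auto simp: g_def g'_def swp_def cyc_next_def\<close>)
  have e2: "(\<Sum>k\<in>{i+1..j-1}. g' k) = (\<Sum>k\<in>{i+1..j-1}. g k)"
  proof (rule sum.reindex_bij_witness[where i="\<lambda>k. i + j - k" and j="\<lambda>k. i + j - k"])
    fix k assume k: "k \<in> {i+1..j-1}"
    show "i + j - (i + j - k) = k" using k by auto
    show "i + j - k \<in> {i+1..j-1}" using k by auto
    have s1: "Suc (i + j - Suc k) = i + j - k" using k by auto
    have s2: "i + j - k < N" using k ij by auto
    have s3: "Suc (i + j) - k = Suc (i + j - k)" using k by auto
    show "g (i + j - k) = g' k"
      using k ij s1 s2 s3 by (auto simp: g_def g'_def swp_def cyc_next_def wt_sym)
  qed auto
  have e3: "g' i = wt r p (\<pi> i) (\<pi> j)"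
    using ij by (auto simp: g'_def swp_def cyc_next_def)
  have e4: "g' j = wt r p (\<pi> (i+1)) (\<pi> (cyc_next N j))"
    using ij by (auto simp: g'_def swp_def cyc_next_def)
  have e5: "g i = wt r p (\<pi> i) (\<pi> (i+1))"
    using ij by (auto simp: g_def cyc_next_def)
  show "Cc r p N (\<pi> \<circ> swp i j) = Cc r p N \<pi> - wt r p (\<pi> i) (\<pi> (i+1)) - wt r p (\<pi> j) (\<pi> (cyc_next N j))
          + wt r p (\<pi> i) (\<pi> j) + wt r p (\<pi> (i+1)) (\<pi> (cyc_next N j))"
    unfolding Cc_def
    using sum_split_seg[OF ij', of g] sum_split_seg[OF ij', of g'] e1 e2 e3 e4 e5
    unfolding g_def g'_def by (simp add: g_def)
qed



definition stuck :: "nat \<Rightarrow> (nat \<Rightarrow> nat) \<Rightarrow> bool" where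
  "stuck N \<pi> \<longleftrightarrow> (\<forall>i\<in>{1..N}. \<forall>j\<in>{1..N}. distinct [\<pi> i, \<pi> (cyc_next N i), \<pi> j, \<pi> (cyc_next N j)] \<longrightarrow>
      \<not> (\<not> crs (\<pi> i) (\<pi> (cyc_next N i)) (\<pi> j) (\<pi> (cyc_next N j)) \<and>
         crs (\<pi> i) (\<pi> j) (\<pi> (cyc_next N i)) (\<pi> (cyc_next N j))))"

lemma min_stuck_aux:
  assumes perm: "\<pi> permutes {1..N}" and p: "p < 0" and mono: "strict_mono_on {1..N} r"
    and opt: "\<And>\<pi>'. \<pi>' permutes {1..N} \<Longrightarrow> Cc r p N \<pi> \<le> Cc r p N \<pi>'"
    and i: "i \<in> {1..N}" and j: "j \<in> {1..N}" and ij: "i < j"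
    and d: "distinct [\<pi> i, \<pi> (cyc_next N i), \<pi> j, \<pi> (cyc_next N j)]"
    and nc: "\<not> crs (\<pi> i) (\<pi> (cyc_next N i)) (\<pi> j) (\<pi> (cyc_next N j))"
    and c: "crs (\<pi> i) (\<pi> j) (\<pi> (cyc_next N i)) (\<pi> (cyc_next N j))"
  shows False
proof -
  have nxi: "cyc_next N i = i + 1" using i j ij by (auto simp: cyc_next_def)
  have j2: "i + 2 \<le> j" using d nxi ij by (cases "j = i + 1") auto
  have S: "\<pi> x \<in> {1..N}" if "x \<in> {1..N}" for x using permutes_in_image[OF perm] that by blast
  note to = two_opt(2)[OF perm _ j2, of r p] and tp = two_opt(1)[OF perm _ j2]
  have "wt r p (\<pi> i) (\<pi> j) + wt r p (\<pi> (i+1)) (\<pi> (cyc_next N j))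
        < wt r p (\<pi> i) (\<pi> (i+1)) + wt r p (\<pi> j) (\<pi> (cyc_next N j))"
  proof -
    have a1: "\<pi> (i+1) \<in> {1..N}" using S[of "i+1"] i j ij by auto
    have a2: "\<pi> (cyc_next N j) \<in> {1..N}" using S nx_in j by blast
    show ?thesis using wt_lt[OF p mono S[OF i] _ S[OF j] a2 _ nc c] a1 d nxi by auto
  qed
  then have "Cc r p N (\<pi> \<circ> swp i j) < Cc r p N \<pi>" using to i j by auto
  moreover have "Cc r p N \<pi> \<le> Cc r p N (\<pi> \<circ> swp i j)" using opt[OF tp] i j by auto
  ultimately show False by simp
qed

lemma min_stuck:
  assumes perm: "\<pi> permutes {1..N}" and p: "p < 0" and mono: "strict_mono_on {1..N} r"
    and opt: "\<And>\<pi>'. \<pi>' permutes {1..N} \<Longrightarrow> Cc r p N \<pi> \<le> Cc r p N \<pi>'"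
  shows "stuck N \<pi>"
  unfolding stuck_def
proof (intro ballI impI notI)
  fix i j assume i: "i \<in> {1..N}" and j: "j \<in> {1..N}"
    and d: "distinct [\<pi> i, \<pi> (cyc_next N i), \<pi> j, \<pi> (cyc_next N j)]"
    and h: "\<not> crs (\<pi> i) (\<pi> (cyc_next N i)) (\<pi> j) (\<pi> (cyc_next N j)) \<and>
         crs (\<pi> i) (\<pi> j) (\<pi> (cyc_next N i)) (\<pi> (cyc_next N j))"
  consider "i < j" | "j < i" using d by (cases "i < j") (auto simp: not_less le_less)
  then show False
  proof cases
    case 1 then show ?thesis using min_stuck_aux[OF perm p mono opt i j _ d] h by auto
  next
    case 2
    have d': "distinct [\<pi> j, \<pi> (cyc_next N j), \<pi> i, \<pi> (cyc_next N i)]" using d by auto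
    have "\<not> crs (\<pi> j) (\<pi> (cyc_next N j)) (\<pi> i) (\<pi> (cyc_next N i))"
      using h d crs_sym[of "\<pi> i"] by auto
    moreover have "crs (\<pi> j) (\<pi> i) (\<pi> (cyc_next N j)) (\<pi> (cyc_next N i))"
      using h crs_swap1 crs_swap2 by metis
    ultimately show ?thesis using min_stuck_aux[OF perm p mono opt j i 2 d'] by auto
  qed
qed



definition rot :: "nat \<Rightarrow> nat \<Rightarrow> nat \<Rightarrow> nat" where
  "rot N t x = ((x - 1 + t) mod N) + 1"

lemma rot_in: "0 < N \<Longrightarrow> rot N t x \<in> {1..N}"
  by (auto simp: rot_def Suc_le_eq)

lemma rot_add: "0 < N \<Longrightarrow> x \<in> {1..N} \<Longrightarrow> rot N a (rot N b x) = rot N (a + b) x"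
proof -
  have "rot N a (rot N b x) = (((x - 1 + b) mod N + a) mod N) + 1" by (simp add: rot_def)
  also have "\<dots> = ((x - 1 + b + a) mod N) + 1" by (simp add: mod_add_left_eq)
  also have "\<dots> = rot N (a + b) x" by (simp add: rot_def ac_simps)
  finally show ?thesis .
qed

lemma rot_0: "x \<in> {1..N} \<Longrightarrow> rot N 0 x = x"
  by (auto simp: rot_def)

lemma rot_mod0: "x \<in> {1..N} \<Longrightarrow> t mod N = 0 \<Longrightarrow> rot N t x = x"
proof -
  assume x: "x \<in> {1..N}" and t: "t mod N = 0"
  have "(x - 1 + t) mod N = (x - 1 + t mod N) mod N" by (simp add: mod_add_right_eq)
  also have "\<dots> = (x - 1) mod N" using t by simp
  also have "\<dots> = x - 1" using x by (intro mod_less) auto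
  finally show ?thesis using x by (simp add: rot_def)
qed

lemma rot_1: "x \<in> {1..N} \<Longrightarrow> rot N 1 x = (if x = N then 1 else x + 1)"
  by (auto simp: rot_def)

lemma rot_inj: "inj_on (rot N t) {1..N}"
proof (rule inj_onI)
  fix x y assume x: "x \<in> {1..N}" and y: "y \<in> {1..N}" and e: "rot N t x = rot N t y"
  then have "(x - 1 + t) mod N = (y - 1 + t) mod N" by (simp add: rot_def)
  then show "x = y"
  proof (cases "x \<le> y")
    case True
    then have "N dvd (y - 1 + t) - (x - 1 + t)" using \<open>(x - 1 + t) mod N = (y - 1 + t) mod N\<close>
      by (subst mod_eq_dvd_iff_nat[symmetric]) auto
    then have "N dvd y - x" using x y True by (simp add: algebra_simps)
    then show ?thesis using x y True by (cases "y - x = 0") (auto dest: dvd_imp_le)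
  next
    case False
    then have "N dvd (x - 1 + t) - (y - 1 + t)" using \<open>(x - 1 + t) mod N = (y - 1 + t) mod N\<close>
      by (subst mod_eq_dvd_iff_nat[symmetric]) auto
    then have "N dvd x - y" using x y False by (simp add: algebra_simps)
    then show ?thesis using x y False by (cases "x - y = 0") (auto dest: dvd_imp_le)
  qed
qed

lemma rot_bij: "0 < N \<Longrightarrow> bij_betw (rot N t) {1..N} {1..N}"
proof -
  assume N: "0 < N"
  have "rot N t ` {1..N} \<subseteq> {1..N}" using rot_in[OF N] by auto
  moreover have "card (rot N t ` {1..N}) = card {1..N}" using card_image[OF rot_inj] by simp
  ultimately have "rot N t ` {1..N} = {1..N}" by (simp add: card_subset_eq)
  then show ?thesis using rot_inj by (simp add: bij_betw_def)
qed

lemma crs_rot1: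
  assumes d: "distinct [a,b,c,d]" and S: "a \<in> {1..N}" "b \<in> {1..N}" "c \<in> {1..N}" "d \<in> {1..N}"
  shows "crs (rot N 1 a) (rot N 1 b) (rot N 1 c) (rot N 1 d) = crs a b c d"
  using d S unfolding rot_1[OF S(1)] rot_1[OF S(2)] rot_1[OF S(3)] rot_1[OF S(4)]
  unfolding crs_def sep_def by (auto simp: min_def max_def)

lemma rot_Suc: "0 < N \<Longrightarrow> x \<in> {1..N} \<Longrightarrow> rot N (Suc t) x = rot N 1 (rot N t x)"
  using rot_add[of N x 1 t] by simp

lemma crs_rot:
  assumes N: "0 < N" and d: "distinct [a,b,c,d]" and S: "a \<in> {1..N}" "b \<in> {1..N}" "c \<in> {1..N}" "d \<in> {1..N}"
  shows "crs (rot N t a) (rot N t b) (rot N t c) (rot N t d) = crs a b c d"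
proof (induction t)
  case 0 then show ?case using S by (simp add: rot_0)
next
  case (Suc t)
  have d': "distinct [rot N t a, rot N t b, rot N t c, rot N t d]"
    using d S inj_onD[OF rot_inj[of N t]] by auto
  show ?case using crs_rot1[OF d' rot_in[OF N] rot_in[OF N] rot_in[OF N] rot_in[OF N]] Suc S N
    by (simp add: rot_Suc)
qed

lemma stuck_rot:
  assumes N: "0 < N" and maps: "\<And>x. x \<in> {1..N} \<Longrightarrow> \<pi> x \<in> {1..N}" and st: "stuck N \<pi>"
  shows "stuck N (rot N t \<circ> \<pi>)"
  unfolding stuck_def
proof (intro ballI impI)
  fix i j assume i: "i \<in> {1..N}" and j: "j \<in> {1..N}"
    and d: "distinct [(rot N t \<circ> \<pi>) i, (rot N t \<circ> \<pi>) (cyc_next N i), (rot N t \<circ> \<pi>) j, (rot N t \<circ> \<pi>) (cyc_next N j)]"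
  have S: "\<pi> i \<in> {1..N}" "\<pi> (cyc_next N i) \<in> {1..N}" "\<pi> j \<in> {1..N}" "\<pi> (cyc_next N j) \<in> {1..N}"
    using maps nx_in i j by auto
  have d0: "distinct [\<pi> i, \<pi> (cyc_next N i), \<pi> j, \<pi> (cyc_next N j)]" using d by auto
  have d1: "distinct [\<pi> i, \<pi> j, \<pi> (cyc_next N i), \<pi> (cyc_next N j)]" using d0 by auto
  show "\<not> (\<not> crs ((rot N t \<circ> \<pi>) i) ((rot N t \<circ> \<pi>) (cyc_next N i)) ((rot N t \<circ> \<pi>) j) ((rot N t \<circ> \<pi>) (cyc_next N j)) \<and>
         crs ((rot N t \<circ> \<pi>) i) ((rot N t \<circ> \<pi>) j) ((rot N t \<circ> \<pi>) (cyc_next N i)) ((rot N t \<circ> \<pi>) (cyc_next N j)))"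
    using st i j d0 crs_rot[OF N d0 S, of t] crs_rot[OF N d1 S(1,3,2,4), of t] unfolding stuck_def by auto
qed

lemma nx_bij: "0 < N \<Longrightarrow> bij_betw (cyc_next N) {1..N} {1..N}"
  by (rule bij_betw_byWitness[where f'="\<lambda>k. if k = 1 then N else k - 1"]) (auto simp: cyc_next_def)

lemma cut_lemma:
  assumes h: "N = 2 * h" "2 \<le> h" and bij: "bij_betw \<pi> {1..N} {1..N}" and st: "stuck N \<pi>"
    and k0: "k0 \<in> {1..N}"
  shows "h \<le> max (\<pi> k0) (\<pi> (cyc_next N k0))"
proof (rule ccontr)
  assume "\<not> h \<le> max (\<pi> k0) (\<pi> (cyc_next N k0))"
  then have a0: "\<pi> k0 < h" "\<pi> (cyc_next N k0) < h" by auto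
  define I where "I = {1..N}"
  have N0: "0 < N" using h by simp
  have inj: "inj_on \<pi> I" using bij by (simp add: bij_betw_def I_def)
  have nb: "bij_betw (cyc_next N) I I" using nx_bij[OF N0] by (simp add: I_def)
  have bij2: "bij_betw (\<pi> \<circ> cyc_next N) I I" using bij_betw_trans[OF nb] bij by (simp add: I_def)
  have inj2: "inj_on (\<pi> \<circ> cyc_next N) I" using bij2 by (simp add: bij_betw_def)
  have inI: "\<pi> k \<in> I" "\<pi> (cyc_next N k) \<in> I" if "k \<in> I" for k
    using bij2 bij that by (auto simp: bij_betw_def I_def)
  have ne: "\<pi> (cyc_next N k) \<noteq> \<pi> k" if "k \<in> I" for k
    using inj nx_ne[of N k] h that nx_in[of k N] by (auto simp: I_def dest: inj_onD)
  define KR where "KR = {k \<in> I. \<pi> k < \<pi> (cyc_next N k)}"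
  define KL where "KL = {k \<in> I. \<not> \<pi> k < \<pi> (cyc_next N k)}"
  have fin: "finite KR" "finite KL" by (auto simp: KR_def KL_def I_def)
  have card: "card KR + card KL = N"
  proof -
    have "KR \<union> KL = I" "KR \<inter> KL = {}" by (auto simp: KR_def KL_def)
    then show ?thesis using card_Un_disjoint[OF fin] by (simp add: I_def)
  qed
  have KIR: "\<pi> k \<le> \<pi> (cyc_next N l)" if "k \<in> KR" "l \<in> KR" for k l
  proof (rule ccontr)
    assume "\<not> ?thesis"
    then have o: "\<pi> l < \<pi> (cyc_next N l)" "\<pi> (cyc_next N l) < \<pi> k" "\<pi> k < \<pi> (cyc_next N k)"
      using that by (auto simp: KR_def)
    have d: "distinct [\<pi> l, \<pi> (cyc_next N l), \<pi> k, \<pi> (cyc_next N k)]" using o by auto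
    have "\<not> crs (\<pi> l) (\<pi> (cyc_next N l)) (\<pi> k) (\<pi> (cyc_next N k))"
      using o by (auto simp: crs_def sep_def)
    moreover have "crs (\<pi> l) (\<pi> k) (\<pi> (cyc_next N l)) (\<pi> (cyc_next N k))"
      using o by (auto simp: crs_def sep_def)
    ultimately show False using st that d unfolding stuck_def KR_def I_def by blast
  qed
  have KIL: "\<pi> (cyc_next N k) \<le> \<pi> l" if "k \<in> KL" "l \<in> KL" for k l
  proof (rule ccontr)
    assume nt: "\<not> ?thesis"
    have lt: "\<pi> (cyc_next N k) < \<pi> k" "\<pi> (cyc_next N l) < \<pi> l"
      using that ne by (auto simp: KL_def order.not_eq_order_implies_strict)
    then have o: "\<pi> (cyc_next N l) < \<pi> l" "\<pi> l < \<pi> (cyc_next N k)" "\<pi> (cyc_next N k) < \<pi> k"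
      using nt by auto
    have d: "distinct [\<pi> l, \<pi> (cyc_next N l), \<pi> k, \<pi> (cyc_next N k)]" using o by auto
    have "\<not> crs (\<pi> l) (\<pi> (cyc_next N l)) (\<pi> k) (\<pi> (cyc_next N k))"
      using o by (auto simp: crs_def sep_def)
    moreover have "crs (\<pi> l) (\<pi> k) (\<pi> (cyc_next N l)) (\<pi> (cyc_next N k))"
      using o by (auto simp: crs_def sep_def)
    ultimately show False using st that d unfolding stuck_def KL_def I_def by blast
  qed
  have k0I: "k0 \<in> I" using k0 by (simp add: I_def)
  show False
  proof (cases "k0 \<in> KR")
    case True
    have "\<pi> ` KR \<subseteq> {1..h-1}" using KIR[OF _ True] a0 inI by (force simp: KR_def I_def)
    then have c1: "card KR \<le> h - 1"
      using card_mono[of "{1..h-1}" "\<pi> ` KR"] card_image[of \<pi> KR] inj_on_subset[OF inj] by (auto simp: KR_def)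
    have "h \<in> \<pi> ` I" using bij h by (auto simp: bij_betw_def I_def)
    then obtain kh where kh: "kh \<in> I" "\<pi> kh = h" by auto
    have khL: "kh \<in> KL" using kh KIR[OF _ True, of kh] a0 by (auto simp: KL_def KR_def)
    have "(\<pi> \<circ> cyc_next N) ` KL \<subseteq> {1..h}" using KIL[OF _ khL] kh inI by (force simp: KL_def I_def)
    then have c2: "card KL \<le> h"
      using card_mono[of "{1..h}" "(\<pi> \<circ> cyc_next N) ` KL"] card_image[of "\<pi> \<circ> cyc_next N" KL]
        inj_on_subset[OF inj2] by (auto simp: KL_def)
    show False using card c1 c2 h by linarith
  next
    case False
    then have k0L: "k0 \<in> KL" using k0I by (auto simp: KR_def KL_def)
    have "(\<pi> \<circ> cyc_next N) ` KL \<subseteq> {1..h-1}" using KIL[OF _ k0L] a0 inI by (force simp: KL_def I_def)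
    then have c1: "card KL \<le> h - 1"
      using card_mono[of "{1..h-1}" "(\<pi> \<circ> cyc_next N) ` KL"] card_image[of "\<pi> \<circ> cyc_next N" KL]
        inj_on_subset[OF inj2] by (auto simp: KL_def)
    have "h \<in> (\<pi> \<circ> cyc_next N) ` I" using bij2 h by (auto simp: bij_betw_def I_def)
    then obtain kh where kh: "kh \<in> I" "\<pi> (cyc_next N kh) = h" by auto
    have khR: "kh \<in> KR" using kh KIL[OF _ k0L, of kh] a0 by (auto simp: KL_def KR_def)
    have "\<pi> ` KR \<subseteq> {1..h}" using KIR[OF _ khR] kh inI by (force simp: KR_def I_def)
    then have c2: "card KR \<le> h"
      using card_mono[of "{1..h}" "\<pi> ` KR"] card_image[of \<pi> KR] inj_on_subset[OF inj] by (auto simp: KR_def)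
    show False using card c1 c2 h by linarith
  qed
qed



lemma mod_cancel_nat:
  fixes a u v N :: nat
  assumes e: "(a + u) mod N = (a + v) mod N" and u: "u < N" and v: "v < N"
  shows "u = v"
proof (cases "u \<le> v")
  case True
  then have "N dvd (a + v) - (a + u)" using e by (subst mod_eq_dvd_iff_nat[symmetric]) auto
  then have "N dvd v - u" by simp
  then show ?thesis using u v True by (cases "v - u = 0") (auto dest: dvd_imp_le)
next
  case False
  then have "N dvd (a + u) - (a + v)" using e by (subst mod_eq_dvd_iff_nat[symmetric]) auto
  then have "N dvd u - v" by simp
  then show ?thesis using u v False by (cases "u - v = 0") (auto dest: dvd_imp_le)
qed

lemma rot_off_inj:
  assumes "rot N o1 x = rot N o2 x" "o1 < N" "o2 < N"
  shows "o1 = o2"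
  using assms mod_cancel_nat[of "x - 1" o1 N o2] by (simp add: rot_def)

lemma rot_inv:
  assumes N: "0 < N" and x: "x \<in> {1..N}" and m: "m \<le> N" and y: "y = rot N m x"
  shows "x = rot N (N - m) y"
  using rot_add[OF N x, of "N - m" m] rot_mod0[OF x, of N] m y by simp

lemma rot_offset:
  assumes x: "x \<in> {1..N}" and y: "y \<in> {1..N}"
  shows "y = rot N ((y + N - x) mod N) x"
proof -
  have "(x - 1 + (y + N - x) mod N) mod N = (x - 1 + (y + N - x)) mod N" by (simp add: mod_add_right_eq)
  also have "x - 1 + (y + N - x) = (y - 1) + N" using x y by auto
  also have "((y - 1) + N) mod N = y - 1"
  proof -
    have "y - 1 < N" using y by auto
    then show ?thesis by (simp only: mod_add_self2 mod_less)
  qed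
  finally show ?thesis using y by (simp add: rot_def)
qed

lemma offsets_sum:
  fixes x y N :: nat
  assumes x: "x \<in> {1..N}" and y: "y \<in> {1..N}" and ne: "x \<noteq> y"
  shows "(y + N - x) mod N + (x + N - y) mod N = N"
proof -
  have xy: "1 \<le> x" "x \<le> N" "1 \<le> y" "y \<le> N" using x y by auto
  show ?thesis
proof (cases "x < y")
  case True
  have e1: "y + N - x = (y - x) + N" using True xy by arith
  have "y - x < N" using True x y by auto
  then have "(y + N - x) mod N = y - x" by (subst e1) (simp only: mod_add_self2 mod_less)
  moreover have "(x + N - y) mod N = N - (y - x)"
  proof -
    have L: "x + N - y < N" using True xy by arith
    then have "(x + N - y) mod N = x + N - y" by simp
    then show ?thesis using True xy by arith
  qed
  ultimately show ?thesis using True y by simp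
next
  case False
  then have yx: "y < x" using ne by simp
  have e1: "x + N - y = (x - y) + N" using yx xy by arith
  have A: "(y + N - x) mod N = N - (x - y)"
  proof -
    have L: "y + N - x < N" using yx xy by arith
    then have "(y + N - x) mod N = y + N - x" by simp
    then show ?thesis using yx xy by arith
  qed
  have "x - y < N" using yx x y by auto
  then have "(x + N - y) mod N = x - y" by (subst e1) (simp only: mod_add_self2 mod_less)
  then show ?thesis using A yx x by simp
qed
qed

lemma bij_stuck_rot:
  assumes N: "0 < N" and bij: "bij_betw \<pi> {1..N} {1..N}" and st: "stuck N \<pi>"
  shows "bij_betw (rot N t \<circ> \<pi>) {1..N} {1..N}" and "stuck N (rot N t \<circ> \<pi>)"
proof -
  show "bij_betw (rot N t \<circ> \<pi>) {1..N} {1..N}" using bij_betw_trans[OF bij rot_bij[OF N]] .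
  have m: "\<And>x. x \<in> {1..N} \<Longrightarrow> \<pi> x \<in> {1..N}" using bij by (auto simp: bij_betw_def)
  show "stuck N (rot N t \<circ> \<pi>)" using stuck_rot[OF N m st] .
qed

lemma rot_at1: "x \<in> {1..N} \<Longrightarrow> rot N (N + 1 - x) x = 1"
  by (simp add: rot_def)

lemma rot_at1': "x \<in> {1..N} \<Longrightarrow> y \<in> {1..N} \<Longrightarrow> rot N (N + 1 - x) y = (y + N - x) mod N + 1"
  by (simp add: rot_def algebra_simps)

lemma G_prop:
  assumes h: "N = 2 * h" "2 \<le> h" and bij: "bij_betw \<pi> {1..N} {1..N}" and st: "stuck N \<pi>"
    and k: "k \<in> {1..N}"
  shows "(\<pi> (cyc_next N k) + N - \<pi> k) mod N \<in> {h - 1, h, h + 1}"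
proof -
  have N: "0 < N" using h by simp
  define x where "x = \<pi> k"
  define y where "y = \<pi> (cyc_next N k)"
  have x: "x \<in> {1..N}" and y: "y \<in> {1..N}" using bij k nx_in[OF k] by (auto simp: bij_betw_def x_def y_def)
  have ne: "x \<noteq> y" unfolding x_def y_def
    using bij k nx_in[OF k] nx_ne[of N k] h by (auto simp: bij_betw_def dest: inj_onD)
  have c1: "h \<le> max ((rot N (N + 1 - x) \<circ> \<pi>) k) ((rot N (N + 1 - x) \<circ> \<pi>) (cyc_next N k))"
    using cut_lemma[OF h bij_stuck_rot[OF N bij st] k] .
  then have d1: "h - 1 \<le> (y + N - x) mod N" using rot_at1[OF x] rot_at1'[OF x y] by (simp add: x_def[symmetric] y_def[symmetric])
  have c2: "h \<le> max ((rot N (N + 1 - y) \<circ> \<pi>) k) ((rot N (N + 1 - y) \<circ> \<pi>) (cyc_next N k))"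
    using cut_lemma[OF h bij_stuck_rot[OF N bij st] k] .
  then have d2: "h - 1 \<le> (x + N - y) mod N" using rot_at1[OF y] rot_at1'[OF y x] by (simp add: x_def[symmetric] y_def[symmetric])
  have "(y + N - x) mod N + (x + N - y) mod N = N" using offsets_sum[OF x y ne] .
  then have "(y + N - x) mod N \<le> h + 1" using d2 h by linarith
  then show ?thesis using d1 h unfolding x_def[symmetric] y_def[symmetric] by auto
qed



definition ex2 :: "bool \<Rightarrow> bool \<Rightarrow> bool \<Rightarrow> bool" where
  "ex2 p q s \<longleftrightarrow> (p \<and> q \<and> \<not> s) \<or> (p \<and> \<not> q \<and> s) \<or> (\<not> p \<and> q \<and> s)"

locale ladder =
  fixes h :: nat and la lb lr :: "nat \<Rightarrow> bool"
  assumes h2: "2 \<le> h"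
    and V1: "\<And>c. 2 \<le> c \<Longrightarrow> c \<le> h \<Longrightarrow> ex2 (lb (c-1)) (lr c) (la c)"
    and V1': "ex2 (la h) (lr 1) (la 1)"
    and V2: "\<And>c. 2 \<le> c \<Longrightarrow> c \<le> h \<Longrightarrow> ex2 (la (c-1)) (lr c) (lb c)"
    and V2': "ex2 (lb h) (lr 1) (lb 1)"
begin

lemma Q_step: "2 \<le> c \<Longrightarrow> c \<le> h \<Longrightarrow> (la (c-1) = lb (c-1)) = (la c = lb c)"
  using V1[of c] V2[of c] unfolding ex2_def by blast

lemma Q_all: "1 \<le> c \<Longrightarrow> c \<le> h \<Longrightarrow> (la c = lb c) = (la 1 = lb 1)"
proof (induction c rule: nat_induct_at_least)
  case base then show ?case by simp
next
  case (Suc n) then show ?case using Q_step[of "Suc n"] by simp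
qed

lemma twist_step: "2 \<le> c \<Longrightarrow> c \<le> h \<Longrightarrow> la (c-1) \<noteq> lb (c-1) \<Longrightarrow> la c \<noteq> lb c \<Longrightarrow> la c = la (c-1)"
  using V1[of c] V2[of c] unfolding ex2_def by blast

lemma twist_all: "1 \<le> c \<Longrightarrow> c \<le> h \<Longrightarrow> (\<forall>c'. 1 \<le> c' \<and> c' \<le> h \<longrightarrow> la c' \<noteq> lb c') \<Longrightarrow> la c = la 1"
proof (induction c rule: nat_induct_at_least)
  case base then show ?case by simp
next
  case (Suc n) then show ?case using twist_step[of "Suc n"] by simp
qed

lemma LZ:
  assumes all: "\<forall>c. 1 \<le> c \<and> c \<le> h \<longrightarrow> la c \<or> lb c"
  shows "\<forall>c. 1 \<le> c \<and> c \<le> h \<longrightarrow> la c \<and> lb c \<and> \<not> lr c"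
proof (cases "la 1 = lb 1")
  case False
  then have ne: "\<forall>c'. 1 \<le> c' \<and> c' \<le> h \<longrightarrow> la c' \<noteq> lb c'" using Q_all by blast
  then have "la h = la 1" using twist_all[of h] h2 by simp
  moreover have "lb h \<noteq> la h" "lb 1 \<noteq> la 1" using ne h2 by auto
  ultimately show ?thesis using V1' V2' unfolding ex2_def by blast
next
  case True
  then have eq: "la c = lb c" if "1 \<le> c" "c \<le> h" for c using Q_all that by blast
  have ab: "la c \<and> lb c" if "1 \<le> c" "c \<le> h" for c using eq[OF that] all that by auto
  show ?thesis
  proof (intro allI impI conjI)
    fix c assume c: "1 \<le> c \<and> c \<le> h"
    show "la c" "lb c" using ab c by auto
    show "\<not> lr c"
    proof (cases "c = 1")
      case True then show ?thesis using V1' ab[of 1] ab[of h] h2 unfolding ex2_def by auto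
    next
      case False
      then have c1: "1 \<le> c - 1" "c - 1 \<le> h" "2 \<le> c" using c by auto
      show ?thesis using V1[of c] ab[of c] ab[OF c1(1,2)] c c1 unfolding ex2_def by auto
    qed
  qed
qed

lemma LN_aux:
  assumes nh: "\<not> la h" "\<not> lb h" and all: "\<forall>c. 1 \<le> c \<and> c \<le> h - 1 \<longrightarrow> la c \<or> lb c"
  shows "1 \<le> c \<Longrightarrow> c \<le> h - 1 \<Longrightarrow> la c \<and> lb c \<and> (c = 1 \<longleftrightarrow> lr c)"
proof (induction c rule: nat_induct_at_least)
  case base then show ?case using V1' V2' nh unfolding ex2_def by auto
next
  case (Suc n)
  then have "la n \<and> lb n" by auto
  moreover have "la (Suc n) \<or> lb (Suc n)" using all Suc by auto
  moreover have "ex2 (lb n) (lr (Suc n)) (la (Suc n))" using V1[of "Suc n"] Suc by auto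
  moreover have "ex2 (la n) (lr (Suc n)) (lb (Suc n))" using V2[of "Suc n"] Suc by auto
  ultimately have "la (Suc n) \<and> lb (Suc n) \<and> \<not> lr (Suc n)" unfolding ex2_def by blast
  then show ?case using Suc.hyps by simp
qed

lemma LN:
  assumes nh: "\<not> la h" "\<not> lb h" and all: "\<forall>c. 1 \<le> c \<and> c \<le> h - 1 \<longrightarrow> la c \<or> lb c"
  shows "\<forall>c. 1 \<le> c \<and> c \<le> h - 1 \<longrightarrow> la c \<and> lb c" and "lr 1" and "lr h"
    and "\<forall>c. 2 \<le> c \<and> c \<le> h - 1 \<longrightarrow> \<not> lr c"
proof -
  show "\<forall>c. 1 \<le> c \<and> c \<le> h - 1 \<longrightarrow> la c \<and> lb c" using LN_aux[OF nh all] by blast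
  show "lr 1" using LN_aux[OF nh all, of 1] h2 by auto
  show "\<forall>c. 2 \<le> c \<and> c \<le> h - 1 \<longrightarrow> \<not> lr c"
  proof (intro allI impI)
    fix c assume "2 \<le> c \<and> c \<le> h - 1"
    then show "\<not> lr c" using LN_aux[OF nh all, of c] by auto
  qed
  have "la (h-1) \<and> lb (h-1)" using LN_aux[OF nh all, of "h-1"] h2 by auto
  then show "lr h" using V1[of h] h2 nh unfolding ex2_def by auto
qed

end


definition adj :: "nat \<Rightarrow> (nat \<Rightarrow> nat) \<Rightarrow> nat \<Rightarrow> nat \<Rightarrow> bool" where
  "adj N \<pi> x y \<longleftrightarrow> {x, y} \<in> cycle_edges N \<pi>"

definition pv :: "nat \<Rightarrow> nat \<Rightarrow> nat" where
  "pv N k = (if k = 1 then N else k - 1)"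

lemma bij_ex: "bij_betw \<pi> A B \<Longrightarrow> x \<in> B \<Longrightarrow> \<exists>k\<in>A. \<pi> k = x"
  unfolding bij_betw_def by blast

lemma adj_sym: "adj N \<pi> x y = adj N \<pi> y x"
  by (simp add: adj_def insert_commute)

lemma pv_in: "k \<in> {1..N} \<Longrightarrow> pv N k \<in> {1..N}"
  by (auto simp: pv_def)

lemma nx_pv: "k \<in> {1..N} \<Longrightarrow> cyc_next N (pv N k) = k"
  by (auto simp: pv_def cyc_next_def)

lemma nx_eq_pv: "k \<in> {1..N} \<Longrightarrow> k' \<in> {1..N} \<Longrightarrow> cyc_next N k' = k \<Longrightarrow> k' = pv N k"
  by (auto simp: pv_def cyc_next_def split: if_splits)

lemma nx_ne_pv: "3 \<le> N \<Longrightarrow> k \<in> {1..N} \<Longrightarrow> cyc_next N k \<noteq> pv N k"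
  by (auto simp: pv_def cyc_next_def)

lemma adj_iff:
  assumes bij: "bij_betw \<pi> {1..N} {1..N}" and k: "k \<in> {1..N}"
  shows "adj N \<pi> (\<pi> k) y \<longleftrightarrow> y = \<pi> (cyc_next N k) \<or> y = \<pi> (pv N k)"
proof
  have inj: "inj_on \<pi> {1..N}" using bij by (simp add: bij_betw_def)
  assume "adj N \<pi> (\<pi> k) y"
  then obtain k' where k': "k' \<in> {1..N}" "{\<pi> k', \<pi> (cyc_next N k')} = {\<pi> k, y}"
    by (auto simp: adj_def cycle_edges_def)
  then consider "\<pi> k' = \<pi> k" "\<pi> (cyc_next N k') = y" | "\<pi> k' = y" "\<pi> (cyc_next N k') = \<pi> k"
    by (auto simp: doubleton_eq_iff)
  then show "y = \<pi> (cyc_next N k) \<or> y = \<pi> (pv N k)"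
  proof cases
    case 1 then show ?thesis using inj k k' by (auto dest: inj_onD)
  next
    case 2
    then have "cyc_next N k' = k" using inj k k' nx_in[OF k'(1)] by (auto dest: inj_onD)
    then show ?thesis using nx_eq_pv[OF k k'(1)] 2 by auto
  qed
next
  assume "y = \<pi> (cyc_next N k) \<or> y = \<pi> (pv N k)"
  then show "adj N \<pi> (\<pi> k) y"
  proof
    assume "y = \<pi> (cyc_next N k)"
    then show ?thesis using k by (auto simp: adj_def cycle_edges_def)
  next
    assume y: "y = \<pi> (pv N k)"
    have "{\<pi> (pv N k), \<pi> (cyc_next N (pv N k))} = {\<pi> k, y}" using y nx_pv[OF k] by auto
    then show ?thesis using pv_in[OF k] unfolding adj_def cycle_edges_def by (metis (no_types, lifting) image_eqI)
  qed
qed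

lemma rot_small:
  assumes x: "x \<in> {1..N}" and t: "t < N"
  shows "rot N t x = (if x + t \<le> N then x + t else x + t - N)"
proof (cases "x + t \<le> N")
  case True
  then have "x - 1 + t < N" using x by auto
  then show ?thesis using True x by (simp add: rot_def)
next
  case False
  then have "N \<le> x - 1 + t" "x - 1 + t - N < N" using x t by auto
  then have "(x - 1 + t) mod N = x - 1 + t - N" by (simp add: le_mod_geq)
  then show ?thesis using False x by (simp add: rot_def)
qed

context
  fixes N h :: nat
  assumes Nh: "N = 2 * h" and h2: "2 \<le> h"
begin

lemma r1: "1 \<le> c \<Longrightarrow> c \<le> h \<Longrightarrow> rot N (h-1) c = c + h - 1"
  using rot_small[of c N "h-1"] Nh h2 by auto
lemma r2: "1 \<le> c \<Longrightarrow> c \<le> h \<Longrightarrow> rot N h c = c + h"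
  using rot_small[of c N h] Nh h2 by auto
lemma r3: "1 \<le> c \<Longrightarrow> c < h \<Longrightarrow> rot N (h+1) c = c + h + 1"
  using rot_small[of c N "h+1"] Nh h2 by auto
lemma r3': "rot N (h+1) h = 1"
  using rot_small[of h N "h+1"] Nh h2 by auto
lemma r4: "2 \<le> c \<Longrightarrow> c \<le> h \<Longrightarrow> rot N (h-1) (c+h) = c - 1"
  using rot_small[of "c+h" N "h-1"] Nh h2 by auto
lemma r4': "rot N (h-1) (1+h) = 2*h"
  using rot_small[of "1+h" N "h-1"] Nh h2 by auto
lemma r5: "1 \<le> c \<Longrightarrow> c \<le> h \<Longrightarrow> rot N h (c+h) = c"
  using rot_small[of "c+h" N h] Nh h2 by auto
lemma r6: "1 \<le> c \<Longrightarrow> c \<le> h \<Longrightarrow> rot N (h+1) (c+h) = c + 1"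
  using rot_small[of "c+h" N "h+1"] Nh h2 by auto
lemma r7: "1 \<le> c \<Longrightarrow> c < N \<Longrightarrow> rot N 1 c = c + 1"
  using rot_small[of c N 1] Nh h2 by auto

lemma cand:
  assumes bij: "bij_betw \<pi> {1..N} {1..N}" and st: "stuck N \<pi>" and x: "x \<in> {1..N}"
    and a: "adj N \<pi> x y"
  shows "y = rot N (h-1) x \<or> y = rot N h x \<or> y = rot N (h+1) x"
proof -
  have N0: "0 < N" using Nh h2 by simp
  obtain k where k: "k \<in> {1..N}" "\<pi> k = x" using bij_ex[OF bij x] by blast
  have inI: "\<pi> j \<in> {1..N}" if "j \<in> {1..N}" for j using bij that by (auto simp: bij_betw_def)
  from a adj_iff[OF bij k(1)] k consider "y = \<pi> (cyc_next N k)" | "y = \<pi> (pv N k)" by auto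
  then show ?thesis
  proof cases
    case 1
    have "(y + N - x) mod N \<in> {h - 1, h, h + 1}" using G_prop[OF Nh h2 bij st k(1)] 1 k by simp
    moreover have "y = rot N ((y + N - x) mod N) x" using rot_offset[OF x] inI nx_in k 1 by auto
    ultimately show ?thesis by auto
  next
    case 2
    have pk: "pv N k \<in> {1..N}" using pv_in k by auto
    have y: "y \<in> {1..N}" using 2 inI pk by auto
    have "(x + N - y) mod N \<in> {h - 1, h, h + 1}" using G_prop[OF Nh h2 bij st pk] 2 k nx_pv[OF k(1)] by simp
    moreover have "x = rot N ((x + N - y) mod N) y" using rot_offset[OF y x] .
    moreover have "(x + N - y) mod N \<le> N" using N0 by (simp add: less_imp_le)
    ultimately have "y = rot N (N - (x + N - y) mod N) x" using rot_inv[OF N0 y] by blast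
    moreover have "N - (x + N - y) mod N \<in> {h + 1, h, h - 1}"
      using \<open>(x + N - y) mod N \<in> {h - 1, h, h + 1}\<close> Nh h2 by auto
    ultimately show ?thesis by auto
  qed
qed

lemma vert_ex2:
  assumes bij: "bij_betw \<pi> {1..N} {1..N}" and st: "stuck N \<pi>" and x: "x \<in> {1..N}"
  shows "ex2 (adj N \<pi> x (rot N (h-1) x)) (adj N \<pi> x (rot N h x)) (adj N \<pi> x (rot N (h+1) x))"
proof -
  obtain k where k: "k \<in> {1..N}" "\<pi> k = x" using bij_ex[OF bij x] by blast
  have inj: "inj_on \<pi> {1..N}" using bij by (simp add: bij_betw_def)
  define s1 where "s1 = \<pi> (cyc_next N k)"
  define s2 where "s2 = \<pi> (pv N k)"
  have ne: "s1 \<noteq> s2"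
  proof
    assume "s1 = s2"
    then have "cyc_next N k = pv N k"
      using inj_onD[OF inj _ nx_in[OF k(1)] pv_in[OF k(1)]] unfolding s1_def s2_def by simp
    then show False using nx_ne_pv[of N k] k Nh h2 by simp
  qed
  have A: "adj N \<pi> x z \<longleftrightarrow> z = s1 \<or> z = s2" for z
    using adj_iff[OF bij k(1), of z] k(2) unfolding s1_def s2_def by simp
  have "adj N \<pi> x s1" "adj N \<pi> x s2" using A by auto
  note c1 = cand[OF bij st x this(1)] and c2 = cand[OF bij st x this(2)]
  have hN: "h - 1 < N" "h < N" "h + 1 < N" using Nh h2 by auto
  have d1: "rot N (h-1) x \<noteq> rot N h x"
  proof
    assume "rot N (h-1) x = rot N h x"
    from rot_off_inj[OF this hN(1,2)] h2 show False by simp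
  qed
  have d2: "rot N (h-1) x \<noteq> rot N (h+1) x"
  proof
    assume "rot N (h-1) x = rot N (h+1) x"
    from rot_off_inj[OF this hN(1,3)] h2 show False by simp
  qed
  have d3: "rot N h x \<noteq> rot N (h+1) x"
  proof
    assume "rot N h x = rot N (h+1) x"
    from rot_off_inj[OF this hN(2,3)] show False by simp
  qed
  show ?thesis unfolding A ex2_def using c1 c2 ne d1 d2 d3 by blast
qed

end


context
  fixes N h :: nat
  assumes Nh: "N = 2 * h" and h2: "2 \<le> h"
begin

definition la :: "(nat \<Rightarrow> nat) \<Rightarrow> nat \<Rightarrow> bool" where
  "la \<pi> c = adj N \<pi> c (rot N (h+1) c)"
definition lb :: "(nat \<Rightarrow> nat) \<Rightarrow> nat \<Rightarrow> bool" where
  "lb \<pi> c = adj N \<pi> (rot N h c) (rot N 1 c)"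
definition lr :: "(nat \<Rightarrow> nat) \<Rightarrow> nat \<Rightarrow> bool" where
  "lr \<pi> c = adj N \<pi> c (rot N h c)"

lemma ladder_interp:
  assumes bij: "bij_betw \<pi> {1..N} {1..N}" and st: "stuck N \<pi>"
  shows "ladder h (la \<pi>) (lb \<pi>) (lr \<pi>)"
proof
  show "2 \<le> h" by (rule h2)
  have hN: "h < N" using Nh h2 by simp
  fix c assume c: "2 \<le> c" "c \<le> h"
  {
    have x: "c \<in> {1..N}" using c Nh by auto
    have e1: "rot N (h-1) c = (c - 1) + h" using r1[OF Nh h2, of c] c by auto
    have e2: "rot N h (c-1) = (c - 1) + h" using r2[OF Nh h2, of "c-1"] c by auto
    have e3: "rot N 1 (c-1) = c" using r7[OF Nh h2, of "c-1"] c hN by auto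
    show "ex2 (lb \<pi> (c-1)) (lr \<pi> c) (la \<pi> c)"
      using vert_ex2[OF Nh h2 bij st x] unfolding la_def lb_def lr_def e1 e2 e3
      by (simp add: adj_sym)
  }
  {
    have x: "c + h \<in> {1..N}" using c Nh by auto
    have e1: "rot N (h-1) (c+h) = c - 1" using r4[OF Nh h2, of c] c by auto
    have e2: "rot N (h+1) (c-1) = c + h" using r3[OF Nh h2, of "c-1"] c by auto
    have e3: "rot N h (c+h) = c" using r5[OF Nh h2, of c] c by auto
    have e4: "rot N h c = c + h" using r2[OF Nh h2, of c] c by auto
    have e5: "rot N (h+1) (c+h) = c + 1" using r6[OF Nh h2, of c] c by auto
    have e6: "rot N 1 c = c + 1" using r7[OF Nh h2, of c] c hN by auto
    show "ex2 (la \<pi> (c-1)) (lr \<pi> c) (lb \<pi> c)"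
      using vert_ex2[OF Nh h2 bij st x] unfolding la_def lb_def lr_def e1 e2 e3 e4 e5 e6
      by (simp add: adj_sym)
  }
next
  have hN: "h < N" using Nh h2 by simp
  {
    have x: "1 \<in> {1..N}" using Nh h2 by auto
    have e1: "rot N (h-1) 1 = h" using r1[OF Nh h2, of 1] h2 by auto
    have e2: "rot N (h+1) h = 1" using r3'[OF Nh h2] .
    show "ex2 (la \<pi> h) (lr \<pi> 1) (la \<pi> 1)"
      using vert_ex2[OF Nh h2 bij st x] unfolding la_def lb_def lr_def e1 e2
      by (simp add: adj_sym)
  }
  {
    have x: "1 + h \<in> {1..N}" using Nh h2 by auto
    have e1: "rot N (h-1) (1+h) = 2*h" using r4'[OF Nh h2] .
    have e2: "rot N h h = 2 * h" using r2[OF Nh h2, of h] h2 by auto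
    have e3: "rot N 1 h = 1 + h" using r7[OF Nh h2, of h] h2 hN by auto
    have e4: "rot N h (1+h) = 1" using r5[OF Nh h2, of 1] h2 by auto
    have e5: "rot N (h+1) (1+h) = 2" using r6[OF Nh h2, of 1] h2 by auto
    have e6: "rot N h 1 = 1 + h" using r2[OF Nh h2, of 1] h2 by auto
    have e7: "rot N 1 1 = 2" using r7[OF Nh h2, of 1] h2 hN by auto
    show "ex2 (lb \<pi> h) (lr \<pi> 1) (lb \<pi> 1)"
      using vert_ex2[OF Nh h2 bij st x] unfolding la_def lb_def lr_def e1 e2 e3 e4 e5 e6 e7
      by (simp add: adj_sym)
  }
qed

end


lemma nx_rot: assumes k: "k \<in> {1..N}" shows "cyc_next N k = rot N 1 k"
  using rot_1[OF k] by (simp add: cyc_next_def)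

lemma orbit_all:
  assumes N0: "0 < N" and P: "\<And>k. k \<in> {1..N} \<Longrightarrow> P k \<Longrightarrow> P (cyc_next N k)"
    and k0: "k0 \<in> {1..N}" "P k0" and k: "k \<in> {1..N}"
  shows "P k"
proof -
  have "P (rot N m k0)" for m
  proof (induction m)
    case 0 then show ?case using k0 rot_0 by simp
  next
    case (Suc m)
    have "rot N m k0 \<in> {1..N}" using rot_in[OF N0] .
    then show ?case using P[OF _ Suc] rot_Suc[OF N0 k0(1)] nx_rot by simp
  qed
  moreover have "k = rot N ((k + N - k0) mod N) k0" using rot_offset[OF k0(1) k] .
  ultimately show ?thesis by metis
qed

context
  fixes N h :: nat
  assumes Nh: "N = 2 * h" and h2: "2 \<le> h"
begin

lemma no_rail:
  assumes bij: "bij_betw \<pi> {1..N} {1..N}" and st: "stuck N \<pi>"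
    and rail: "\<forall>c. 1 \<le> c \<and> c \<le> h \<longrightarrow> la N h \<pi> c \<and> lb N h \<pi> c \<and> \<not> lr N h \<pi> c"
  shows False
proof -
  have N0: "0 < N" and N3: "3 \<le> N" and hN: "h < N" using Nh h2 by auto
  have inj: "inj_on \<pi> {1..N}" using bij by (simp add: bij_betw_def)
  have inI: "\<pi> j \<in> {1..N}" if "j \<in> {1..N}" for j using bij that by (auto simp: bij_betw_def)
  have norung: "\<not> adj N \<pi> x (rot N h x)" if x: "x \<in> {1..N}" for x
  proof (cases "x \<le> h")
    case True
    then show ?thesis using rail[rule_format, of x] x by (auto simp: lr_def[OF Nh h2])
  next
    case False
    define c where "c = x - h"
    have c: "1 \<le> c" "c \<le> h" "x = c + h" using False x Nh by (auto simp: c_def)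
    have "rot N h x = c" using r5[OF Nh h2 c(1,2)] c(3) by simp
    moreover have "\<not> adj N \<pi> c (rot N h c)" using rail[rule_format, of c] c by (auto simp: lr_def[OF Nh h2])
    moreover have "rot N h c = x" using r2[OF Nh h2 c(1,2)] c(3) by simp
    ultimately show ?thesis by (simp add: adj_sym)
  qed
  have step: "\<pi> (cyc_next N k) = rot N (h-1) (\<pi> k) \<or> \<pi> (cyc_next N k) = rot N (h+1) (\<pi> k)"
    if k: "k \<in> {1..N}" for k
  proof -
    have a: "adj N \<pi> (\<pi> k) (\<pi> (cyc_next N k))" using adj_iff[OF bij k] by simp
    have "\<pi> (cyc_next N k) \<noteq> rot N h (\<pi> k)" using norung[OF inI[OF k]] a by auto
    then show ?thesis using cand[OF Nh h2 bij st inI[OF k] a] by auto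
  qed
  have bk: "rot N (h-1) (rot N (h+1) x) = x" "rot N (h+1) (rot N (h-1) x) = x" if x: "x \<in> {1..N}" for x
    using rot_add[OF N0 x, of "h-1" "h+1"] rot_add[OF N0 x, of "h+1" "h-1"] rot_mod0[OF x, of "2*h"] Nh h2
    by (auto simp: mult_2)
  have dd: "rot N (h-1) y \<noteq> rot N (h+1) y" for y
  proof
    assume a: "rot N (h-1) y = rot N (h+1) y"
    have "h - 1 < N" "h + 1 < N" using Nh h2 by auto
    from rot_off_inj[OF a this] h2 show False by simp
  qed
  define up where "up k \<longleftrightarrow> \<pi> (cyc_next N k) = rot N (h+1) (\<pi> k)" for k
  have prp: "up (cyc_next N k) = up k" if k: "k \<in> {1..N}" for k
  proof -
    have k1: "cyc_next N k \<in> {1..N}" using nx_in[OF k] .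
    have zx: "\<pi> (cyc_next N (cyc_next N k)) \<noteq> \<pi> k"
      using inj_onD[OF inj _ nx_in[OF k1] k] nx_nx_ne[OF N3 k] by auto
    show ?thesis
    proof (cases "up k")
      case True
      then have y: "\<pi> (cyc_next N k) = rot N (h+1) (\<pi> k)" by (simp add: up_def)
      then have "rot N (h-1) (\<pi> (cyc_next N k)) = \<pi> k" using bk(1)[OF inI[OF k]] by simp
      then show ?thesis using step[OF k1] zx True by (auto simp: up_def)
    next
      case False
      then have y: "\<pi> (cyc_next N k) = rot N (h-1) (\<pi> k)" using step[OF k] by (auto simp: up_def)
      then have "rot N (h+1) (\<pi> (cyc_next N k)) = \<pi> k" using bk(2)[OF inI[OF k]] by simp
      then have "\<pi> (cyc_next N (cyc_next N k)) = rot N (h-1) (\<pi> (cyc_next N k))"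
        using step[OF k1] zx by auto
      then show ?thesis using False dd by (auto simp: up_def)
    qed
  qed
  have one: "1 \<in> {1..N}" using N0 by simp
  have allup: "up k = up 1" if k: "k \<in> {1..N}" for k
    using orbit_all[OF N0 _ one _ k, of "\<lambda>k. up k = up 1"] prp by simp
  have v: "h + 1 \<in> {1..N}" "2 \<in> {1..N}" "h + 2 \<in> {1..N}" using Nh h2 by auto
  show False
  proof (cases "up 1")
    case True
    obtain k1 where k1: "k1 \<in> {1..N}" "\<pi> k1 = h + 1" using bij_ex[OF bij v(1)] by blast
    obtain k2 where k2: "k2 \<in> {1..N}" "\<pi> k2 = 1" using bij_ex[OF bij one] by blast
    have "\<pi> (cyc_next N k1) = 2" using allup[OF k1(1)] True k1 r6[OF Nh h2, of 1] h2
      by (auto simp: up_def add.commute)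
    moreover have "\<pi> (cyc_next N k2) = h + 2" using allup[OF k2(1)] True k2 r3[OF Nh h2, of 1] h2
      by (auto simp: up_def)
    moreover have "distinct [\<pi> k1, \<pi> (cyc_next N k1), \<pi> k2, \<pi> (cyc_next N k2)] \<longrightarrow>
      \<not> (\<not> crs (\<pi> k1) (\<pi> (cyc_next N k1)) (\<pi> k2) (\<pi> (cyc_next N k2)) \<and>
         crs (\<pi> k1) (\<pi> k2) (\<pi> (cyc_next N k1)) (\<pi> (cyc_next N k2)))"
      using st k1(1) k2(1) unfolding stuck_def by blast
    ultimately show False using k1 k2 h2 by (simp add: crs_def sep_def)
  next
    case False
    obtain k1 where k1: "k1 \<in> {1..N}" "\<pi> k1 = 2" using bij_ex[OF bij v(2)] by blast
    obtain k2 where k2: "k2 \<in> {1..N}" "\<pi> k2 = h + 2" using bij_ex[OF bij v(3)] by blast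
    have "\<pi> (cyc_next N k1) = h + 1" using allup[OF k1(1)] False k1 step[OF k1(1)] r1[OF Nh h2, of 2] h2
      by (auto simp: up_def)
    moreover have "\<pi> (cyc_next N k2) = 1" using allup[OF k2(1)] False k2 step[OF k2(1)] r4[OF Nh h2, of 2] h2
      by (auto simp: up_def add.commute)
    moreover have "distinct [\<pi> k1, \<pi> (cyc_next N k1), \<pi> k2, \<pi> (cyc_next N k2)] \<longrightarrow>
      \<not> (\<not> crs (\<pi> k1) (\<pi> (cyc_next N k1)) (\<pi> k2) (\<pi> (cyc_next N k2)) \<and>
         crs (\<pi> k1) (\<pi> k2) (\<pi> (cyc_next N k1)) (\<pi> (cyc_next N k2)))"
      using st k1(1) k2(1) unfolding stuck_def by blast
    ultimately show False using k1 k2 h2 by (simp add: crs_def sep_def)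
  qed
qed

end


definition Estar :: "nat \<Rightarrow> nat set set" where
  "Estar h = {{1, 1+h}, {h, 2*h}} \<union> (\<lambda>g. {g, g+h+1}) ` {1..h-1} \<union> (\<lambda>g. {g+h, g+1}) ` {1..h-1}"

lemma card_2_le: "card {a, b} \<le> 2"
  by (simp add: card_insert_if)

lemma card_Estar: assumes h1: "1 \<le> h" shows "card (Estar h) \<le> 2 * h"
proof -
  define A where "A = {{1, 1+h}, {h, 2*h}}"
  define B where "B = (\<lambda>g. {g, g+h+1}) ` {1..h-1}"
  define C where "C = (\<lambda>g. {g+h, g+1}) ` {1..h-1}"
  have e: "card (Estar h) = card (A \<union> B \<union> C)" by (simp add: Estar_def A_def B_def C_def)
  have c1: "card (A \<union> B \<union> C) \<le> card (A \<union> B) + card C" by (rule card_Un_le)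
  have c2: "card (A \<union> B) \<le> card A + card B" by (rule card_Un_le)
  have c3: "card A \<le> 2" unfolding A_def by (rule card_2_le)
  have c4: "card B \<le> h - 1" unfolding B_def using card_image_le[of "{1..h-1}" "\<lambda>g. {g, g+h+1}"] by simp
  have c5: "card C \<le> h - 1" unfolding C_def using card_image_le[of "{1..h-1}" "\<lambda>g. {g+h, g+1}"] by simp
  show ?thesis using e c1 c2 c3 c4 c5 h1 by linarith
qed

context
  fixes N h :: nat
  assumes Nh: "N = 2 * h" and h2: "2 \<le> h"
begin

lemma adj_la: "1 \<le> g \<Longrightarrow> g < h \<Longrightarrow> la N h \<pi> g = adj N \<pi> g (g + h + 1)"
  using r3[OF Nh h2] by (simp add: la_def[OF Nh h2])
lemma adj_la_h: "la N h \<pi> h = adj N \<pi> 1 h"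
  using r3'[OF Nh h2] by (simp add: la_def[OF Nh h2] adj_sym)
lemma adj_lb:
  assumes "1 \<le> g" "g \<le> h" shows "lb N h \<pi> g = adj N \<pi> (g + h) (g + 1)"
proof -
  have "g < N" using assms Nh h2 by simp
  then show ?thesis using r2[OF Nh h2 assms] r7[OF Nh h2 assms(1)] by (simp add: lb_def[OF Nh h2])
qed
lemma adj_lr: "1 \<le> c \<Longrightarrow> c \<le> h \<Longrightarrow> lr N h \<pi> c = adj N \<pi> c (c + h)"
  using r2[OF Nh h2, of c] by (simp add: lr_def[OF Nh h2])

lemma no_second_zero:
  assumes bij: "bij_betw \<pi> {1..N} {1..N}" and st: "stuck N \<pi>"
    and nh: "\<not> la N h \<pi> h" "\<not> lb N h \<pi> h" and g: "1 \<le> g" "g \<le> h - 1"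
    and ng: "\<not> la N h \<pi> g" "\<not> lb N h \<pi> g"
  shows False
proof -
  have N0: "0 < N" using Nh h2 by simp
  define S where "S = {x. (1 \<le> x \<and> x \<le> g) \<or> (h < x \<and> x \<le> g + h)}"
  have inI: "\<pi> j \<in> {1..N}" if "j \<in> {1..N}" for j using bij that by (auto simp: bij_betw_def)
  have nh': "\<not> adj N \<pi> 1 h" "\<not> adj N \<pi> (1 + h) (2 * h)"
    using nh adj_la_h adj_lb[of h] h2 by (auto simp: adj_sym mult_2)
  have ng': "\<not> adj N \<pi> g (g + h + 1)" "\<not> adj N \<pi> (g + h) (g + 1)"
    using ng adj_la[of g] adj_lb[of g] g h2 by auto
  have clo: "\<pi> (cyc_next N k) \<in> S" if k: "k \<in> {1..N}" and xS: "\<pi> k \<in> S" for k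
  proof -
    define x where "x = \<pi> k"
    define y where "y = \<pi> (cyc_next N k)"
    have x: "x \<in> {1..N}" using inI[OF k] by (simp add: x_def)
    have a: "adj N \<pi> x y" using adj_iff[OF bij k] by (simp add: x_def y_def)
    have cy: "y = rot N (h-1) x \<or> y = rot N h x \<or> y = rot N (h+1) x" using cand[OF Nh h2 bij st x a] .
    have xS': "x \<in> S" using xS by (simp add: x_def)
    show ?thesis unfolding y_def[symmetric]
    proof (cases "x \<le> g")
      case True
      then have c: "1 \<le> x" "x \<le> h" "x < h" using x g by auto
      from cy show "y \<in> S"
      proof (elim disjE)
        assume yy: "y = rot N (h-1) x"
        then have yv: "y = x + h - 1" using r1[OF Nh h2 c(1,2)] by simp
        show "y \<in> S"
        proof (cases "x = 1")
          case True then show ?thesis using a yv nh' by simp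
        next
          case False then show ?thesis using yv True c by (auto simp: S_def)
        qed
      next
        assume "y = rot N h x"
        then show "y \<in> S" using r2[OF Nh h2 c(1,2)] True c by (auto simp: S_def)
      next
        assume "y = rot N (h+1) x"
        then have yv: "y = x + h + 1" using r3[OF Nh h2 c(1,3)] by simp
        show "y \<in> S"
        proof (cases "x = g")
          case True then show ?thesis using a yv ng' by simp
        next
          case False then show ?thesis using yv \<open>x \<le> g\<close> c by (auto simp: S_def)
        qed
      qed
    next
      case False
      then have xr: "h < x" "x \<le> g + h" using xS' g by (auto simp: S_def)
      define c where "c = x - h"
      have c: "1 \<le> c" "c \<le> h" "x = c + h" "c \<le> g" using xr g by (auto simp: c_def)
      from cy show "y \<in> S"
      proof (elim disjE)
        assume yy: "y = rot N (h-1) x"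
        show "y \<in> S"
        proof (cases "c = 1")
          case True
          then have "y = 2 * h" using yy r4'[OF Nh h2] c(3) by (simp add: add.commute)
          then show ?thesis using a c(3) True nh' by simp
        next
          case False
          then have "y = c - 1" using yy r4[OF Nh h2, of c] c by simp
          then show ?thesis using False c by (auto simp: S_def)
        qed
      next
        assume "y = rot N h x"
        then show "y \<in> S" using r5[OF Nh h2 c(1,2)] c by (auto simp: S_def)
      next
        assume "y = rot N (h+1) x"
        then have yv: "y = c + 1" using r6[OF Nh h2 c(1,2)] c(3) by simp
        show "y \<in> S"
        proof (cases "c = g")
          case True then show ?thesis using a yv c(3) ng' by simp
        next
          case False then show ?thesis using yv c g by (auto simp: S_def)
        qed
      qed
    qed
  qed
  have one: "1 \<in> {1..N}" "h \<in> {1..N}" using Nh h2 by auto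
  obtain k0 where k0: "k0 \<in> {1..N}" "\<pi> k0 = 1" using bij_ex[OF bij one(1)] by blast
  obtain kh where kh: "kh \<in> {1..N}" "\<pi> kh = h" using bij_ex[OF bij one(2)] by blast
  have "\<pi> k0 \<in> S" using k0 g by (simp add: S_def)
  then have "\<pi> kh \<in> S" using orbit_all[OF N0 _ k0(1) _ kh(1), of "\<lambda>k. \<pi> k \<in> S"] clo by blast
  then show False using kh g by (auto simp: S_def)
qed

end


context
  fixes N h :: nat
  assumes Nh: "N = 2 * h" and h2: "2 \<le> h"
begin

lemma E_eq:
  assumes bij: "bij_betw \<pi> {1..N} {1..N}" and st: "stuck N \<pi>"
    and nh: "\<not> la N h \<pi> h" "\<not> lb N h \<pi> h"
  shows "cycle_edges N \<pi> = Estar h"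
proof -
  have N3: "3 \<le> N" using Nh h2 by simp
  have conn: "\<forall>g. 1 \<le> g \<and> g \<le> h - 1 \<longrightarrow> la N h \<pi> g \<or> lb N h \<pi> g"
    using no_second_zero[OF Nh h2 bij st nh] by blast
  interpret ladder h "la N h \<pi>" "lb N h \<pi>" "lr N h \<pi>" using ladder_interp[OF Nh h2 bij st] .
  note LNs = LN[OF nh conn]
  have rung: "c = 1 \<or> c = h" if "1 \<le> c" "c \<le> h" "adj N \<pi> c (c + h)" for c
  proof (rule ccontr)
    assume "\<not> (c = 1 \<or> c = h)"
    then have "2 \<le> c \<and> c \<le> h - 1" using that by auto
    then have "\<not> lr N h \<pi> c" using LNs(4) by blast
    moreover have "lr N h \<pi> c" using adj_lr[OF Nh h2 that(1,2)] that(3) by simp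
    ultimately show False by simp
  qed
  have nh': "\<not> adj N \<pi> 1 h" "\<not> adj N \<pi> (h + h) (h + 1)"
    using nh adj_la_h[OF Nh h2] adj_lb[OF Nh h2, of h] h2 by auto
  have inI: "\<pi> j \<in> {1..N}" if "j \<in> {1..N}" for j using bij that by (auto simp: bij_betw_def)
  have sub: "{\<pi> k, \<pi> (cyc_next N k)} \<in> Estar h" if k: "k \<in> {1..N}" for k
  proof -
    define x where "x = \<pi> k"
    define y where "y = \<pi> (cyc_next N k)"
    have x: "x \<in> {1..N}" using inI[OF k] by (simp add: x_def)
    have a: "adj N \<pi> x y" using adj_iff[OF bij k] by (simp add: x_def y_def)
    have cy: "y = rot N (h-1) x \<or> y = rot N h x \<or> y = rot N (h+1) x" using cand[OF Nh h2 bij st x a] .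
    have rungE: "{c, c + h} \<in> Estar h" if "1 \<le> c" "c \<le> h" "adj N \<pi> c (c + h)" for c
      using rung[OF that] by (auto simp: Estar_def mult_2)
    show ?thesis unfolding x_def[symmetric] y_def[symmetric]
    proof (cases "x \<le> h")
      case True
      then have c: "1 \<le> x" "x \<le> h" using x by auto
      from cy show "{x, y} \<in> Estar h"
      proof (elim disjE)
        assume yy: "y = rot N (h-1) x"
        then have yv: "y = x + h - 1" using r1[OF Nh h2 c] by simp
        show ?thesis
        proof (cases "x = 1")
          case True then show ?thesis using a yv nh' by simp
        next
          case False
          then have "{x, y} = {(x - 1) + h, (x - 1) + 1}" using yv c by auto
          moreover have "x - 1 \<in> {1..h-1}" using False c by auto
          ultimately show ?thesis unfolding Estar_def by blast
        qed
      next
        assume "y = rot N h x"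
        then have "y = x + h" using r2[OF Nh h2 c] by simp
        then show ?thesis using rungE[OF c] a by simp
      next
        assume yy: "y = rot N (h+1) x"
        show ?thesis
        proof (cases "x = h")
          case True then show ?thesis using a yy r3'[OF Nh h2] nh' by (simp add: adj_sym)
        next
          case False
          then have "y = x + h + 1" using yy r3[OF Nh h2, of x] c by simp
          moreover have "x \<in> {1..h-1}" using False c by auto
          ultimately show ?thesis unfolding Estar_def by blast
        qed
      qed
    next
      case False
      define c where "c = x - h"
      have c: "1 \<le> c" "c \<le> h" "x = c + h" using False x Nh by (auto simp: c_def)
      from cy show "{x, y} \<in> Estar h"
      proof (elim disjE)
        assume yy: "y = rot N (h-1) x"
        show ?thesis
        proof (cases "c = 1")
          case True
          then have "y = 2 * h" using yy r4'[OF Nh h2] c(3) by (simp add: add.commute)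
          then show ?thesis using a c(3) True nh' adj_lb[OF Nh h2, of h] nh h2
            by (simp add: adj_sym mult_2 add.commute)
        next
          case False
          then have "y = c - 1" using yy r4[OF Nh h2, of c] c by simp
          then have "{x, y} = {c - 1, (c - 1) + h + 1}" using c False by auto
          moreover have "c - 1 \<in> {1..h-1}" using False c by auto
          ultimately show ?thesis unfolding Estar_def by blast
        qed
      next
        assume "y = rot N h x"
        then have "y = c" using r5[OF Nh h2 c(1,2)] c(3) by simp
        then show ?thesis using rungE[OF c(1,2)] a c(3) by (simp add: adj_sym insert_commute)
      next
        assume "y = rot N (h+1) x"
        then have yv: "y = c + 1" using r6[OF Nh h2 c(1,2)] c(3) by simp
        show ?thesis
        proof (cases "c = h")
          case True then show ?thesis using a yv c(3) nh' by simp
        next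
          case False
          then have "c \<in> {1..h-1}" using c by auto
          then show ?thesis using yv c(3) unfolding Estar_def by blast
        qed
      qed
    qed
  qed
  have "cycle_edges N \<pi> \<subseteq> Estar h" using sub by (auto simp: cycle_edges_def)
  moreover have "card (cycle_edges N \<pi>) = N"
  proof -
    have inj: "inj_on \<pi> {1..N}" using bij by (simp add: bij_betw_def)
    show ?thesis unfolding cycle_edges_def using card_image[OF edge_inj[OF inj N3]] by simp
  qed
  moreover have "finite (Estar h)" by (simp add: Estar_def)
  moreover have "card (Estar h) \<le> 2 * h" using card_Estar[of h] h2 by simp
  ultimately show ?thesis using Nh by (intro card_seteq) auto
qed

end


lemma sig_val: "sigma0 (2*h) i = (if i = 1 then 1 else if even i \<and> i \<le> h + 1 then h + 3 - i
      else if odd i \<and> i \<le> h + 1 then 2*h + 3 - i else if even i then i - h else i)"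
  by (simp add: sigma0_def)

definition sinv :: "nat \<Rightarrow> nat \<Rightarrow> nat" where
  "sinv h v = (if v = 1 then 1 else if v \<le> h + 1 then (if even (v + h + 1) then h + 3 - v else v + h)
     else (if even v then 2*h + 3 - v else v))"

lemma sig_in: "2 \<le> h \<Longrightarrow> i \<in> {1..2*h} \<Longrightarrow> sigma0 (2*h) i \<in> {1..2*h}"
  unfolding sig_val by (auto; presburger)

lemma sig_inv: "2 \<le> h \<Longrightarrow> i \<in> {1..2*h} \<Longrightarrow> sinv h (sigma0 (2*h) i) = i"
  unfolding sig_val sinv_def by (auto; presburger)

lemma sig_inj: "2 \<le> h \<Longrightarrow> inj_on (sigma0 (2*h)) {1..2*h}"
  by (rule inj_on_inverseI[where g="sinv h"]) (rule sig_inv)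

lemma sig_pair:
  assumes h2: "2 \<le> h" and i: "i \<in> {1..2*h}"
  shows "{(if sigma0 (2*h) i = 1 then 2*h else sigma0 (2*h) i - 1),
          (if sigma0 (2*h) (cyc_next (2*h) i) = 1 then 2*h else sigma0 (2*h) (cyc_next (2*h) i) - 1)} \<in> Estar h"
proof -
  define a where "a = sigma0 (2*h) i"
  define b where "b = sigma0 (2*h) (cyc_next (2*h) i)"
  consider "i = 1" | "i = 2*h" | "i = h + 1" | "2 \<le> i \<and> i \<le> h" | "h + 2 \<le> i \<and> i < 2*h"
    using i by (cases "i = 1"; cases "i = 2*h"; cases "i = h + 1"; cases "i \<le> h") auto
  then have G: "{(if a = 1 then 2*h else a - 1), (if b = 1 then 2*h else b - 1)} \<in> Estar h"
  proof cases
    case 1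
    then have "a = 1" "b = h + 1" using h2 by (auto simp: a_def b_def sig_val cyc_next_def)
    then show ?thesis using h2 by (auto simp: Estar_def)
  next
    case 2
    then have "a = h" "b = 1" using h2 by (auto simp: a_def b_def sig_val cyc_next_def)
    then have "{(if a = 1 then 2*h else a - 1), (if b = 1 then 2*h else b - 1)} = {h - 1, (h - 1) + h + 1}"
      using h2 by auto
    moreover have "h - 1 \<in> {1..h-1}" using h2 by auto
    ultimately show ?thesis unfolding Estar_def by blast
  next
    case 3
    then have "{a, b} = {2, h + 2}" using h2 by (auto simp: a_def b_def sig_val cyc_next_def; presburger)
    then have "{(if a = 1 then 2*h else a - 1), (if b = 1 then 2*h else b - 1)} = {1, 1 + h}"
      using h2 by (auto simp: doubleton_eq_iff)
    then show ?thesis by (simp add: Estar_def)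
  next
    case 4
    have nxi: "cyc_next (2*h) i = i + 1" using 4 by (auto simp: cyc_next_def)
    show ?thesis
    proof (cases "even i")
      case True
      then have "a = h + 3 - i" "b = 2*h + 2 - i" using 4 h2 nxi by (auto simp: a_def b_def sig_val)
      then have "{(if a = 1 then 2*h else a - 1), (if b = 1 then 2*h else b - 1)} = {(h + 1 - i) + h, (h + 1 - i) + 1}"
        using 4 h2 by auto
      moreover have "h + 1 - i \<in> {1..h-1}" using 4 by auto
      ultimately show ?thesis unfolding Estar_def by blast
    next
      case False
      then have i3: "3 \<le> i" using 4 by (cases "i = 2") auto
      then have "a = 2*h + 3 - i" "b = h + 2 - i" using False 4 h2 nxi by (auto simp: a_def b_def sig_val)
      then have "{(if a = 1 then 2*h else a - 1), (if b = 1 then 2*h else b - 1)} = {h + 1 - i, (h + 1 - i) + h + 1}"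
        using 4 i3 h2 by auto
      moreover have "h + 1 - i \<in> {1..h-1}" using 4 i3 by auto
      ultimately show ?thesis unfolding Estar_def by blast
    qed
  next
    case 5
    have nxi: "cyc_next (2*h) i = i + 1" using 5 by (auto simp: cyc_next_def)
    show ?thesis
    proof (cases "even i")
      case True
      then have "a = i - h" "b = i + 1" using 5 h2 nxi by (auto simp: a_def b_def sig_val)
      then have "{(if a = 1 then 2*h else a - 1), (if b = 1 then 2*h else b - 1)} = {i - h - 1, (i - h - 1) + h + 1}"
        using 5 h2 by auto
      moreover have "i - h - 1 \<in> {1..h-1}" using 5 by auto
      ultimately show ?thesis unfolding Estar_def by blast
    next
      case False
      then have "a = i" "b = i + 1 - h" using 5 h2 nxi by (auto simp: a_def b_def sig_val)
      then have "{(if a = 1 then 2*h else a - 1), (if b = 1 then 2*h else b - 1)} = {(i - h - 1) + h, (i - h - 1) + 1}"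
        using 5 h2 by auto
      moreover have "i - h - 1 \<in> {1..h-1}" using 5 by auto
      ultimately show ?thesis unfolding Estar_def by blast
    qed
  qed
  from G show ?thesis unfolding a_def b_def .
qed



definition img :: "nat \<Rightarrow> nat \<Rightarrow> nat set set \<Rightarrow> nat set set" where
  "img N s E = (\<lambda>e. rot N s ` e) ` E"

lemma cyc_rot: "cycle_edges N (rot N s \<circ> \<pi>) = img N s (cycle_edges N \<pi>)"
  unfolding cycle_edges_def img_def by (auto simp: image_image)

lemma img_img:
  assumes N: "0 < N" and E: "\<forall>e\<in>E. e \<subseteq> {1..N}"
  shows "img N a (img N b E) = img N (a + b) E"
proof -
  have "rot N a ` rot N b ` e = rot N (a + b) ` e" if "e \<in> E" for e
    unfolding image_image
  proof (rule image_cong)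
    fix x assume "x \<in> e"
    then have "x \<in> {1..N}" using E that by blast
    then show "rot N a (rot N b x) = rot N (a + b) x" using rot_add[OF N] by simp
  qed simp
  then show ?thesis unfolding img_def image_image by (auto intro!: image_cong)
qed

lemma img_id:
  assumes E: "\<forall>e\<in>E. e \<subseteq> {1..N}" and s: "s mod N = 0"
  shows "img N s E = E"
proof -
  have "rot N s ` e = e" if "e \<in> E" for e
  proof -
    have "rot N s ` e = id ` e"
    proof (rule image_cong)
      fix x assume "x \<in> e"
      then have "x \<in> {1..N}" using E that by blast
      then show "rot N s x = id x" using rot_mod0[OF _ s] by simp
    qed simp
    then show ?thesis by simp
  qed
  then show ?thesis unfolding img_def by simp
qed

lemma edges_sub: "(\<And>x. x \<in> {1..N} \<Longrightarrow> \<pi> x \<in> {1..N}) \<Longrightarrow> \<forall>e\<in>cycle_edges N \<pi>. e \<subseteq> {1..N}"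
  unfolding cycle_edges_def using nx_in by auto

lemma Estar_sub: "1 \<le> h \<Longrightarrow> \<forall>e\<in>Estar h. e \<subseteq> {1..2*h}"
  unfolding Estar_def by auto

lemma adj_rot:
  assumes N: "0 < N" and m: "\<And>x. x \<in> {1..N} \<Longrightarrow> \<pi> x \<in> {1..N}" and a: "a \<in> {1..N}" and b: "b \<in> {1..N}"
  shows "adj N (rot N t \<circ> \<pi>) (rot N t a) (rot N t b) = adj N \<pi> a b"
proof -
  have sub: "\<forall>e\<in>cycle_edges N \<pi>. e \<subseteq> {1..N}" using edges_sub[OF m] .
  have ab: "{a, b} \<subseteq> {1..N}" using a b by auto
  have iff: "rot N t ` e = rot N t ` {a, b} \<longleftrightarrow> e = {a, b}" if "e \<in> cycle_edges N \<pi>" for e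
    using inj_on_image_eq_iff[OF rot_inj[of N t] _ ab, of e] sub that by blast
  have "adj N (rot N t \<circ> \<pi>) (rot N t a) (rot N t b) \<longleftrightarrow> (\<exists>e\<in>cycle_edges N \<pi>. rot N t ` e = rot N t ` {a, b})"
    unfolding adj_def cyc_rot img_def by auto
  also have "\<dots> \<longleftrightarrow> (\<exists>e\<in>cycle_edges N \<pi>. e = {a, b})" using iff by blast
  also have "\<dots> \<longleftrightarrow> adj N \<pi> a b" unfolding adj_def by auto
  finally show ?thesis .
qed

lemma rot_comm: "0 < N \<Longrightarrow> x \<in> {1..N} \<Longrightarrow> rot N a (rot N b x) = rot N b (rot N a x)"
  using rot_add[of N x a b] rot_add[of N x b a] by (simp add: add.commute)

lemma tau_rot: "x \<in> {1..N} \<Longrightarrow> (tau N ^^ k) x = rot N k x"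
proof (induction k)
  case 0 then show ?case by (simp add: rot_0)
next
  case (Suc k)
  have N0: "0 < N" using Suc.prems by auto
  have r: "rot N k x \<in> {1..N}" using rot_in[OF N0] .
  have "tau N (rot N k x) = rot N 1 (rot N k x)" using rot_1[OF r] r by (auto simp: tau_def)
  then show ?case using Suc rot_Suc[OF N0 Suc.prems] by simp
qed

lemma cyc_cong: "(\<And>i. i \<in> {1..N} \<Longrightarrow> f i = g i) \<Longrightarrow> cycle_edges N f = cycle_edges N g"
  unfolding cycle_edges_def using nx_in by (auto intro!: image_cong)

lemma sig_edges:
  assumes h2: "2 \<le> h"
  shows "cycle_edges (2*h) (sigma0 (2*h)) = img (2*h) 1 (Estar h)"
proof -
  define N where "N = 2 * h"
  have N0: "0 < N" and N3: "3 \<le> N" using h2 by (auto simp: N_def)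
  have bk: "rot N 1 (rot N (N - 1) x) = x" if "x \<in> {1..N}" for x
    using rot_add[OF N0 that, of 1 "N - 1"] rot_mod0[OF that, of N] N0 by simp
  have Pv: "rot N (N - 1) x = (if x = 1 then N else x - 1)" if "x \<in> {1..N}" for x
    using rot_small[OF that, of "N - 1"] N0 that by auto
  have sub: "cycle_edges N (sigma0 N) \<subseteq> img N 1 (Estar h)"
  proof
    fix e assume "e \<in> cycle_edges N (sigma0 N)"
    then obtain i where i: "i \<in> {1..N}" and e: "e = {sigma0 N i, sigma0 N (cyc_next N i)}"
      by (auto simp: cycle_edges_def)
    have s: "sigma0 N i \<in> {1..N}" "sigma0 N (cyc_next N i) \<in> {1..N}"
      using sig_in[OF h2] i nx_in[OF i] by (auto simp: N_def)
    define e' where "e' = {rot N (N - 1) (sigma0 N i), rot N (N - 1) (sigma0 N (cyc_next N i))}"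
    have "e' \<in> Estar h" unfolding e'_def Pv[OF s(1)] Pv[OF s(2)] unfolding N_def
      using sig_pair[OF h2 i[unfolded N_def]] .
    moreover have "rot N 1 ` e' = e" unfolding e'_def e using bk s by simp
    ultimately show "e \<in> img N 1 (Estar h)" unfolding img_def by blast
  qed
  have card1: "card (cycle_edges N (sigma0 N)) = N"
    unfolding cycle_edges_def using card_image[OF edge_inj[OF sig_inj[OF h2] ]] N3
    by (simp add: N_def)
  have card2: "card (img N 1 (Estar h)) \<le> N"
    using card_image_le[of "Estar h" "\<lambda>e. rot N 1 ` e"] card_Estar[of h] h2
    by (simp add: img_def N_def Estar_def)
  have "finite (img N 1 (Estar h))" by (simp add: img_def Estar_def)
  then show ?thesis using sub card1 card2 by (simp add: N_def card_seteq)
qed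



theorem proposition4:
  fixes N :: nat and p :: real and r :: "nat \<Rightarrow> real" and H :: "nat set set"
  assumes "N \<ge> 4" and "even N" and "p < 0"
    and "\<forall>i\<in>{1..N}. 0 \<le> r i \<and> r i \<le> 1"
    and "strict_mono_on {1..N} r"
    and "ham_cycle N H"
  shows "(MIN k\<in>{1..N}. cost r p (cycle_edges N ((tau N ^^ k) \<circ> sigma0 N))) \<le> cost r p H"
proof -
  note N4 = assms(1) and p = assms(3) and mono = assms(5)
  obtain h where Nh: "N = 2 * h" using assms(2) by (auto elim: evenE)
  have h2: "2 \<le> h" using N4 Nh by simp
  have N0: "0 < N" and N3: "3 \<le> N" using N4 by auto
  obtain \<pi>H where \<pi>H: "\<pi>H permutes {1..N}" "H = cycle_edges N \<pi>H"
    using assms(6) by (auto simp: ham_cycle_def)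
  define P where "P = {\<pi>. \<pi> permutes {1..(N::nat)}}"
  have finP: "finite P" unfolding P_def by (rule finite_permutations) simp
  have idP: "id \<in> P" unfolding P_def by (simp add: permutes_id)
  have "Min (Cc r p N ` P) \<in> Cc r p N ` P" using Min_in[of "Cc r p N ` P"] finP idP by blast
  then obtain \<pi>0 where \<pi>0P: "\<pi>0 \<in> P" and \<pi>0min: "Cc r p N \<pi>0 = Min (Cc r p N ` P)"
    by (metis imageE)
  have opt: "Cc r p N \<pi>0 \<le> Cc r p N \<pi>'" if "\<pi>' permutes {1..N}" for \<pi>'
    using Min_le[of "Cc r p N ` P" "Cc r p N \<pi>'"] finP that \<pi>0min by (auto simp: P_def)
  have perm0: "\<pi>0 permutes {1..N}" using \<pi>0P by (simp add: P_def)
  have st0: "stuck N \<pi>0" using min_stuck[OF perm0 p mono opt] .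
  have bij0: "bij_betw \<pi>0 {1..N} {1..N}" using permutes_imp_bij[OF perm0] .
  have m0: "\<And>x. x \<in> {1..N} \<Longrightarrow> \<pi>0 x \<in> {1..N}" using permutes_in_image[OF perm0] by blast
  interpret L0: ladder h "la N h \<pi>0" "lb N h \<pi>0" "lr N h \<pi>0" using ladder_interp[OF Nh h2 bij0 st0] .
  obtain g where g: "1 \<le> g" "g \<le> h" "\<not> la N h \<pi>0 g" "\<not> lb N h \<pi>0 g"
  proof -
    have "\<not> (\<forall>c. 1 \<le> c \<and> c \<le> h \<longrightarrow> la N h \<pi>0 c \<or> lb N h \<pi>0 c)"
      using L0.LZ no_rail[OF Nh h2 bij0 st0] by blast
    then show ?thesis using that by blast
  qed
  define t where "t = h - g"
  define \<pi>1 where "\<pi>1 = rot N t \<circ> \<pi>0"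
  have bij1: "bij_betw \<pi>1 {1..N} {1..N}" and st1: "stuck N \<pi>1"
    using bij_stuck_rot[OF N0 bij0 st0, of t] by (auto simp: \<pi>1_def)
  have gI: "g \<in> {1..N}" using g Nh by auto
  have tg: "rot N t g = h" using rot_small[OF gI, of t] g Nh h2 by (auto simp: t_def)
  have rI: "rot N s x \<in> {1..N}" for s x using rot_in[OF N0] .
  have la1: "la N h \<pi>1 h = la N h \<pi>0 g"
  proof -
    have "la N h \<pi>1 h = adj N \<pi>1 (rot N t g) (rot N (h+1) (rot N t g))"
      using tg by (simp add: la_def[OF Nh h2])
    also have "rot N (h+1) (rot N t g) = rot N t (rot N (h+1) g)" using rot_comm[OF N0 gI] .
    also have "adj N \<pi>1 (rot N t g) (rot N t (rot N (h+1) g)) = adj N \<pi>0 g (rot N (h+1) g)"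
      unfolding \<pi>1_def using adj_rot[OF N0 m0 gI rI] .
    finally show ?thesis by (simp add: la_def[OF Nh h2])
  qed
  have lb1: "lb N h \<pi>1 h = lb N h \<pi>0 g"
  proof -
    have "lb N h \<pi>1 h = adj N \<pi>1 (rot N h (rot N t g)) (rot N 1 (rot N t g))"
      using tg by (simp add: lb_def[OF Nh h2])
    also have "rot N h (rot N t g) = rot N t (rot N h g)" using rot_comm[OF N0 gI] .
    also have "rot N 1 (rot N t g) = rot N t (rot N 1 g)" using rot_comm[OF N0 gI] .
    also have "adj N \<pi>1 (rot N t (rot N h g)) (rot N t (rot N 1 g)) = adj N \<pi>0 (rot N h g) (rot N 1 g)"
      unfolding \<pi>1_def using adj_rot[OF N0 m0 rI rI] .
    finally show ?thesis by (simp add: lb_def[OF Nh h2])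
  qed
  have E1: "cycle_edges N \<pi>1 = Estar h"
    using E_eq[OF Nh h2 bij1 st1] la1 lb1 g by simp
  have E1': "cycle_edges N \<pi>1 = img N t (cycle_edges N \<pi>0)" unfolding \<pi>1_def by (rule cyc_rot)
  define k where "k = N - (t + 1) mod N"
  have "(t + 1) mod N < N" using N0 by simp
  then have kI: "k \<in> {1..N}" by (auto simp: k_def)
  have kmod: "(k + 1 + t) mod N = 0"
  proof -
    have "(k + 1 + t) mod N = (N - (t + 1) mod N + (t + 1) mod N) mod N"
      unfolding k_def by (simp add: mod_add_right_eq add.assoc)
    also have "\<dots> = 0" using N0 by simp
    finally show ?thesis .
  qed
  have sub0: "\<forall>e\<in>cycle_edges N \<pi>0. e \<subseteq> {1..N}" using edges_sub[OF m0] .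
  have subE: "\<forall>e\<in>Estar h. e \<subseteq> {1..N}" using Estar_sub[of h] h2 Nh by auto
  have sigI: "sigma0 N i \<in> {1..N}" if "i \<in> {1..N}" for i using sig_in[OF h2] that Nh by simp
  have "cycle_edges N ((tau N ^^ k) \<circ> sigma0 N) = cycle_edges N (rot N k \<circ> sigma0 N)"
    by (rule cyc_cong) (simp add: tau_rot[OF sigI])
  also have "\<dots> = img N k (cycle_edges N (sigma0 N))" by (rule cyc_rot)
  also have "cycle_edges N (sigma0 N) = img N 1 (Estar h)" using sig_edges[OF h2] Nh by simp
  also have "img N k (img N 1 (Estar h)) = img N (k + 1) (Estar h)" using img_img[OF N0 subE] .
  also have "Estar h = img N t (cycle_edges N \<pi>0)" using E1 E1' by simp
  also have "img N (k + 1) (img N t (cycle_edges N \<pi>0)) = img N (k + 1 + t) (cycle_edges N \<pi>0)"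
    using img_img[OF N0 sub0] .
  also have "\<dots> = cycle_edges N \<pi>0" using img_id[OF sub0 kmod] .
  finally have Ek: "cycle_edges N ((tau N ^^ k) \<circ> sigma0 N) = cycle_edges N \<pi>0" .
  have inj0: "inj_on \<pi>0 {1..N}" using bij0 by (simp add: bij_betw_def)
  have injH: "inj_on \<pi>H {1..N}" using permutes_imp_bij[OF \<pi>H(1)] by (simp add: bij_betw_def)
  have "(MIN k\<in>{1..N}. cost r p (cycle_edges N ((tau N ^^ k) \<circ> sigma0 N)))
        \<le> cost r p (cycle_edges N ((tau N ^^ k) \<circ> sigma0 N))"
    using kI by (intro Min_le) auto
  also have "\<dots> = Cc r p N \<pi>0" using Ek cost_eq[OF inj0 N3] by simp
  also have "\<dots> \<le> Cc r p N \<pi>H" using opt[OF \<pi>H(1)] .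
  also have "\<dots> = cost r p H" using cost_eq[OF injH N3] \<pi>H(2) by simp
  finally show ?thesis .
qed


end
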